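(* There is no $d$-dimensional ($d\ge4$) conformally flat Lorentzian spacetime with Ricci tensor $R_{ab}=\lambda g_{ab}+\eta\ell_a\ell_b$ ($\ell$ null, $\eta$ nowhere vanishing) for which $\ell$ is twisting (i.e. the optical matrix $\rho_{ij}=m_{(i)}^am_{(j)}^b\nabla_b\ell_a$ has nonzero antisymmetric part).
   Context: Null frame $\{\ell,n,m_{(i)}\}$: $\ell\cdot\ell=n\cdot n=\ell\cdot m_{(i)}=n\cdot m_{(i)}=0$, $\ell\cdot n=1$, $m_{(i)}\cdot m_{(j)}=\delta_{ij}$. Conformally flat: Weyl tensor vanishes. *)

theory Defs
  imports "HOL-Analysis.Analysis"
begin

text \<open>A spacetime region is an open set U of
  coordinates in real^'n (dimension d = CARD('n)); the metric is given by its
  components g a b :: real^'n \<Rightarrow> real in these coordinates.\<close>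

type_synonym 'n field = "real^'n \<Rightarrow> real"

definition pd :: "('n::finite) \<Rightarrow> 'n field \<Rightarrow> 'n field" where
  "pd k f x = frechet_derivative f (at x) (axis k 1)"

fun smooth_k :: "nat \<Rightarrow> (real^('n::finite)) set \<Rightarrow> 'n field \<Rightarrow> bool" where
  "smooth_k 0 U f = continuous_on U f"
| "smooth_k (Suc k) U f = (f differentiable_on U \<and> (\<forall>i. smooth_k k U (pd i f)))"

definition smooth_on_U :: "(real^('n::finite)) set \<Rightarrow> 'n field \<Rightarrow> bool" where
  "smooth_on_U U f = (\<forall>k. smooth_k k U f)"

type_synonym 'n metric = "'n \<Rightarrow> 'n \<Rightarrow> 'n field"

definition gmat :: "'n metric \<Rightarrow> real^'n \<Rightarrow> real^'n^'n" where
  "gmat g x = (\<chi> a b. g a b x)"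

definition ginv :: "('n::finite) metric \<Rightarrow> 'n metric" where
  "ginv g a b x = matrix_inv (gmat g x) $ a $ b"

definition lorentzian_at :: "('n::finite) metric \<Rightarrow> real^'n \<Rightarrow> bool" where
  "lorentzian_at g x \<longleftrightarrow> (\<forall>a b. g a b x = g b a x) \<and>
     (\<exists>P::real^'n^'n. invertible P \<and> (\<exists>i0. \<forall>a b.
        (transpose P ** gmat g x ** P) $ a $ b =
          (if a = b then (if a = i0 then -1 else 1) else 0)))"

definition christoffel :: "('n::finite) metric \<Rightarrow> 'n \<Rightarrow> 'n \<Rightarrow> 'n \<Rightarrow> 'n field" where
  "christoffel g a b c x = (1/2) * (\<Sum>e\<in>UNIV. ginv g a e x *
      (pd b (g e c) x + pd c (g e b) x - pd e (g b c) x))"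

definition riemann_up :: "('n::finite) metric \<Rightarrow> 'n \<Rightarrow> 'n \<Rightarrow> 'n \<Rightarrow> 'n \<Rightarrow> 'n field" where
  "riemann_up g a b c d x =
     pd c (christoffel g a d b) x - pd d (christoffel g a c b) x
     + (\<Sum>e\<in>UNIV. christoffel g a c e x * christoffel g e d b x
                 - christoffel g a d e x * christoffel g e c b x)"

definition riemann :: "('n::finite) metric \<Rightarrow> 'n \<Rightarrow> 'n \<Rightarrow> 'n \<Rightarrow> 'n \<Rightarrow> 'n field" where
  "riemann g a b c d x = (\<Sum>e\<in>UNIV. g a e x * riemann_up g e b c d x)"

definition ricci :: "('n::finite) metric \<Rightarrow> 'n metric" where
  "ricci g b d x = (\<Sum>a\<in>UNIV. riemann_up g a b a d x)"

definition scalar_curv :: "('n::finite) metric \<Rightarrow> 'n field" where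
  "scalar_curv g x = (\<Sum>b\<in>UNIV. \<Sum>d\<in>UNIV. ginv g b d x * ricci g b d x)"

definition weyl :: "('n::finite) metric \<Rightarrow> 'n \<Rightarrow> 'n \<Rightarrow> 'n \<Rightarrow> 'n \<Rightarrow> 'n field" where
  "weyl g a b c d x = (let n = real CARD('n); Ric = (\<lambda>p q. ricci g p q x);
      G = (\<lambda>p q. g p q x) in
     riemann g a b c d x
     - (G a c * Ric d b - G a d * Ric c b - G b c * Ric d a + G b d * Ric c a) / (n - 2)
     + scalar_curv g x * (G a c * G d b - G a d * G c b) / ((n - 1) * (n - 2)))"

definition conformally_flat_on :: "('n::finite) metric \<Rightarrow> (real^'n) set \<Rightarrow> bool" where
  "conformally_flat_on g U \<longleftrightarrow> (\<forall>x\<in>U. \<forall>a b c d. weyl g a b c d x = 0)"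

definition gdot :: "('n::finite) metric \<Rightarrow> real^'n \<Rightarrow> real^'n \<Rightarrow> real^'n \<Rightarrow> real" where
  "gdot g x u v = (\<Sum>a\<in>UNIV. \<Sum>b\<in>UNIV. g a b x * u $ a * v $ b)"

definition raise :: "('n::finite) metric \<Rightarrow> ('n \<Rightarrow> 'n field) \<Rightarrow> real^'n \<Rightarrow> real^'n" where
  "raise g l x = (\<chi> a. \<Sum>b\<in>UNIV. ginv g a b x * l b x)"

definition cov_deriv :: "('n::finite) metric \<Rightarrow> ('n \<Rightarrow> 'n field) \<Rightarrow> 'n \<Rightarrow> 'n \<Rightarrow> 'n field" where
  "cov_deriv g l b a x = pd b (l a) x - (\<Sum>c\<in>UNIV. christoffel g c b a x * l c x)"

definition null_frame :: "('n::finite) metric \<Rightarrow> real^'n \<Rightarrow> real^'n \<Rightarrow> real^'n \<Rightarrow> (nat \<Rightarrow> real^'n) \<Rightarrow> bool" where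
  "null_frame g x L N M \<longleftrightarrow>
     gdot g x L L = 0 \<and> gdot g x N N = 0 \<and> gdot g x L N = 1 \<and>
     (\<forall>i < CARD('n) - 2. gdot g x L (M i) = 0 \<and> gdot g x N (M i) = 0) \<and>
     (\<forall>i < CARD('n) - 2. \<forall>j < CARD('n) - 2.
        gdot g x (M i) (M j) = (if i = j then 1 else 0))"

definition optical_matrix :: "('n::finite) metric \<Rightarrow> ('n \<Rightarrow> 'n field) \<Rightarrow> real^'n \<Rightarrow> (nat \<Rightarrow> real^'n) \<Rightarrow> nat \<Rightarrow> nat \<Rightarrow> real" where
  "optical_matrix g l x M i j =
     (\<Sum>a\<in>UNIV. \<Sum>b\<in>UNIV. M i $ a * M j $ b * cov_deriv g l b a x)"

definition twisting_at :: "('n::finite) metric \<Rightarrow> ('n \<Rightarrow> 'n field) \<Rightarrow> real^'n \<Rightarrow> bool" where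
  "twisting_at g l x \<longleftrightarrow> (\<exists>N M. null_frame g x (raise g l x) N M \<and>
     (\<exists>i < CARD('n) - 2. \<exists>j < CARD('n) - 2.
        optical_matrix g l x M i j \<noteq> optical_matrix g l x M j i))"

end

theory Submission
  imports Defs
begin



lemma frechet_eq_local:
  assumes "open U" "y \<in> U" "\<forall>z\<in>U. f z = h z"
  shows "frechet_derivative f (at y) = frechet_derivative h (at y)"
proof -
  have "(f has_derivative D) (at y) \<longleftrightarrow> (h has_derivative D) (at y)" for D
  proof
    assume "(f has_derivative D) (at y)"
    then show "(h has_derivative D) (at y)"
      by (rule has_derivative_transform_within_open[where s=U]) (use assms in auto)
  next
    assume "(h has_derivative D) (at y)"
    then show "(f has_derivative D) (at y)"
      by (rule has_derivative_transform_within_open[where s=U]) (use assms in auto)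
  qed
  then show ?thesis unfolding frechet_derivative_def by simp
qed

lemma pd_cong:
  assumes "open U" "y \<in> U" "\<forall>z\<in>U. f z = h z"
  shows "pd i f y = pd i h y"
  unfolding pd_def using frechet_eq_local[OF assms] by simp

lemma diff_cong:
  assumes "open U" "z \<in> U" "\<forall>w\<in>U. f w = h w" "f differentiable (at z)"
  shows "h differentiable (at z)"
proof -
  obtain D where "(f has_derivative D) (at z)" using assms(4) unfolding differentiable_def by blast
  then have "(h has_derivative D) (at z)"
    by (rule has_derivative_transform_within_open[where s=U]) (use assms in auto)
  then show ?thesis unfolding differentiable_def by blast
qed

lemma smooth_k_cong:
  assumes "open U" "\<forall>z\<in>U. f z = h z" "smooth_k k U f"
  shows "smooth_k k U h"
  using assms(2,3)
proof (induction k arbitrary: f h)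
  case 0
  then show ?case using continuous_on_cong by (metis smooth_k.simps(1))
next
  case (Suc k)
  have "f differentiable_on U" using Suc.prems by simp
  then have d: "h differentiable_on U"
    using Suc.prems(1) diff_cong[OF assms(1)] differentiable_on_eq_differentiable_at[OF assms(1)] by blast
  have "\<forall>i. smooth_k k U (pd i h)"
  proof
    fix i
    have "\<forall>z\<in>U. pd i f z = pd i h z" using pd_cong[OF assms(1)] Suc.prems(1) by blast
    then show "smooth_k k U (pd i h)" using Suc.IH Suc.prems(2) by auto
  qed
  then show ?case using d by simp
qed

lemma smooth_k_mono: "smooth_k (Suc k) U f \<Longrightarrow> smooth_k k U f"
proof (induction k arbitrary: f)
  case 0
  then show ?case using differentiable_imp_continuous_on by (metis smooth_k.simps)
next
  case (Suc k)
  then show ?case by simp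
qed

lemma smooth_on_U_cong:
  assumes "open U" "\<forall>z\<in>U. f z = h z" "smooth_on_U U f"
  shows "smooth_on_U U h"
  using assms smooth_k_cong unfolding smooth_on_U_def by blast

lemma smooth_pd: "smooth_on_U U f \<Longrightarrow> smooth_on_U U (pd i f)"
  unfolding smooth_on_U_def by (metis smooth_k.simps(2))

lemma smooth_diffable:
  assumes "smooth_on_U U f" "open U" "y \<in> U"
  shows "f differentiable (at y)"
proof -
  have "smooth_k (Suc 0) U f" using assms(1) unfolding smooth_on_U_def by blast
  then show ?thesis using differentiable_on_eq_differentiable_at[OF assms(2)] assms(3) by auto
qed

lemma smooth_cont:
  assumes "smooth_on_U U f" shows "continuous_on U f"
  using assms unfolding smooth_on_U_def by (metis smooth_k.simps(1))

lemma pd_has: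
  assumes "(f has_derivative F) (at y)" shows "pd i f y = F (axis i 1)"
  unfolding pd_def using frechet_derivative_at[OF assms] by simp

lemma has_fd: "f differentiable (at y) \<Longrightarrow> (f has_derivative frechet_derivative f (at y)) (at y)"
  using frechet_derivative_works by blast

lemma pd_add:
  assumes "f differentiable (at y)" "h differentiable (at y)"
  shows "pd i (\<lambda>z. f z + h z) y = pd i f y + pd i h y"
  using pd_has[OF has_derivative_add[OF has_fd[OF assms(1)] has_fd[OF assms(2)]]]
  unfolding pd_def by simp

lemma pd_diff:
  assumes "f differentiable (at y)" "h differentiable (at y)"
  shows "pd i (\<lambda>z. f z - h z) y = pd i f y - pd i h y"
  using pd_has[OF has_derivative_diff[OF has_fd[OF assms(1)] has_fd[OF assms(2)]]]
  unfolding pd_def by simp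

lemma pd_mult:
  assumes "f differentiable (at y)" "h differentiable (at y)"
  shows "pd i (\<lambda>z. f z * h z) y = f y * pd i h y + pd i f y * h y"
  using pd_has[OF has_derivative_mult[OF has_fd[OF assms(1)] has_fd[OF assms(2)]]]
  unfolding pd_def by simp

lemma pd_const: "pd i (\<lambda>z. c) y = 0"
  using pd_has[OF has_derivative_const[of c "at y"], of i] by simp

lemma pd_cmult:
  assumes "f differentiable (at y)"
  shows "pd i (\<lambda>z. c * f z) y = c * pd i f y"
  using pd_mult[OF _ assms, of "\<lambda>_. c"] by (simp add: pd_const)

lemma pd_inverse:
  assumes "f differentiable (at y)" "f y \<noteq> 0"
  shows "pd i (\<lambda>z. inverse (f z)) y = - (inverse (f y) * pd i f y * inverse (f y))"
  using pd_has[OF Deriv.has_derivative_inverse[OF assms(2) has_fd[OF assms(1)]]]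
  unfolding pd_def by simp

lemma pd_sum:
  assumes "finite A" "\<forall>a\<in>A. f a differentiable (at y)"
  shows "pd i (\<lambda>z. \<Sum>a\<in>A. f a z) y = (\<Sum>a\<in>A. pd i (f a) y)"
proof -
  have "((\<lambda>z. \<Sum>a\<in>A. f a z) has_derivative (\<lambda>v. \<Sum>a\<in>A. frechet_derivative (f a) (at y) v)) (at y)"
    by (rule has_derivative_sum) (use assms has_fd in auto)
  from pd_has[OF this] show ?thesis unfolding pd_def by simp
qed

lemma smooth_k_const: fixes U :: "(real^'n::finite) set" shows "smooth_k k U (\<lambda>z. c)"
proof (induction k arbitrary: c)
  case 0 then show ?case by simp
next
  case (Suc k)
  have "pd i (\<lambda>z::real^'n. c) = (\<lambda>z. 0)" for i by (rule ext) (simp add: pd_const)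
  then show ?case using Suc by simp
qed

lemma smooth_const: "smooth_on_U U (\<lambda>z. c)"
  unfolding smooth_on_U_def using smooth_k_const by blast

lemma smooth_k_add:
  assumes "open U"
  shows "smooth_k k U f \<Longrightarrow> smooth_k k U h \<Longrightarrow> smooth_k k U (\<lambda>z. f z + h z)"
proof (induction k arbitrary: f h)
  case 0 then show ?case by (simp add: continuous_on_add)
next
  case (Suc k)
  have d: "(\<lambda>z. f z + h z) differentiable_on U" using Suc.prems by (simp add: differentiable_on_add)
  have "smooth_k k U (pd i (\<lambda>z. f z + h z))" for i
  proof -
    have "f differentiable_on U" "h differentiable_on U" using Suc.prems by simp_all
    then have dd: "\<forall>z\<in>U. f differentiable (at z) \<and> h differentiable (at z)"
      using differentiable_on_eq_differentiable_at[OF assms] by blast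
    have "\<forall>z\<in>U. pd i f z + pd i h z = pd i (\<lambda>z. f z + h z) z"
    proof
      fix z assume "z \<in> U" then show "pd i f z + pd i h z = pd i (\<lambda>z. f z + h z) z"
        using dd pd_add by metis
    qed
    moreover have "smooth_k k U (\<lambda>z. pd i f z + pd i h z)"
      using Suc.IH Suc.prems by simp
    ultimately show ?thesis by (rule smooth_k_cong[OF assms])
  qed
  then show ?case using d by simp
qed

lemma smooth_k_mult:
  assumes "open U"
  shows "smooth_k k U f \<Longrightarrow> smooth_k k U h \<Longrightarrow> smooth_k k U (\<lambda>z. f z * h z)"
proof (induction k arbitrary: f h)
  case 0 then show ?case by (simp add: continuous_on_mult)
next
  case (Suc k)
  have d: "(\<lambda>z. f z * h z) differentiable_on U" using Suc.prems by simp
  have "smooth_k k U (pd i (\<lambda>z. f z * h z))" for i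
  proof -
    have "f differentiable_on U" "h differentiable_on U" using Suc.prems by simp_all
    then have dd: "\<forall>z\<in>U. f differentiable (at z) \<and> h differentiable (at z)"
      using differentiable_on_eq_differentiable_at[OF assms] by blast
    have "\<forall>z\<in>U. f z * pd i h z + pd i f z * h z = pd i (\<lambda>z. f z * h z) z"
    proof
      fix z assume "z \<in> U" then show "f z * pd i h z + pd i f z * h z = pd i (\<lambda>z. f z * h z) z"
        using dd pd_mult by metis
    qed
    moreover have "smooth_k k U (\<lambda>z. f z * pd i h z + pd i f z * h z)"
    proof -
      have a: "smooth_k k U f" "smooth_k k U h" using Suc.prems smooth_k_mono by blast+
      have b: "smooth_k k U (pd i f)" "smooth_k k U (pd i h)" using Suc.prems by simp_all
      show ?thesis by (rule smooth_k_add[OF assms]) (use Suc.IH a b in blast)+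
    qed
    ultimately show ?thesis by (rule smooth_k_cong[OF assms])
  qed
  then show ?case using d by simp
qed

lemma smooth_k_inverse:
  assumes "open U" "\<forall>z\<in>U. f z \<noteq> 0"
  shows "smooth_k k U f \<Longrightarrow> smooth_k k U (\<lambda>z. inverse (f z))"
proof (induction k)
  case 0 then have "continuous_on U f" by simp
  then show ?case using assms(2) by (auto intro!: continuous_on_inverse)
next
  case (Suc k)
  have d: "(\<lambda>z. inverse (f z)) differentiable_on U" using Suc.prems assms by simp
  have "smooth_k k U (pd i (\<lambda>z. inverse (f z)))" for i
  proof -
    have "f differentiable_on U" using Suc.prems by simp_all
    then have dd: "\<forall>z\<in>U. f differentiable (at z)"
      using differentiable_on_eq_differentiable_at[OF assms(1)] by blast
    have "\<forall>z\<in>U. (\<lambda>z. - 1) z * ((\<lambda>z. inverse (f z)) z * pd i f z * (\<lambda>z. inverse (f z)) z) = pd i (\<lambda>z. inverse (f z)) z"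
    proof
      fix z assume "z \<in> U" then show "(\<lambda>z. - 1) z * ((\<lambda>z. inverse (f z)) z * pd i f z * (\<lambda>z. inverse (f z)) z) = pd i (\<lambda>z. inverse (f z)) z"
        using dd pd_inverse[of f z i] assms(2) by simp
    qed
    moreover have "smooth_k k U (\<lambda>z. (\<lambda>z. - 1) z * ((\<lambda>z. inverse (f z)) z * pd i f z * (\<lambda>z. inverse (f z)) z))"
    proof -
      have a: "smooth_k k U (\<lambda>z. inverse (f z))" using Suc.IH Suc.prems smooth_k_mono by blast
      have b: "smooth_k k U (pd i f)" using Suc.prems by simp
      show ?thesis
        by (intro smooth_k_mult[OF assms(1)] smooth_k_const a b)
    qed
    ultimately show ?thesis by (rule smooth_k_cong[OF assms(1)])
  qed
  then show ?case using d by simp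
qed

lemma smooth_add: assumes "open U" "smooth_on_U U f" "smooth_on_U U h" shows "smooth_on_U U (\<lambda>z. f z + h z)"
  using assms(2,3) smooth_k_add[OF assms(1), of _ f h] unfolding smooth_on_U_def by blast
lemma smooth_mult: assumes "open U" "smooth_on_U U f" "smooth_on_U U h" shows "smooth_on_U U (\<lambda>z. f z * h z)"
  using assms(2,3) smooth_k_mult[OF assms(1), of _ f h] unfolding smooth_on_U_def by blast
lemma smooth_inverse: assumes "open U" "\<forall>z\<in>U. f z \<noteq> 0" "smooth_on_U U f" shows "smooth_on_U U (\<lambda>z. inverse (f z))"
  using assms(3) smooth_k_inverse[OF assms(1,2)] unfolding smooth_on_U_def by blast
lemma smooth_cmult: assumes "open U" "smooth_on_U U f" shows "smooth_on_U U (\<lambda>z. c * f z)"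
  using smooth_mult[OF assms(1) smooth_const assms(2)] .
lemma smooth_diff: assumes "open U" "smooth_on_U U f" "smooth_on_U U h" shows "smooth_on_U U (\<lambda>z. f z - h z)"
  using smooth_add[OF assms(1,2) smooth_cmult[OF assms(1,3), of "-1"]] by simp
lemma smooth_divide: assumes "open U" "\<forall>z\<in>U. h z \<noteq> 0" "smooth_on_U U f" "smooth_on_U U h" shows "smooth_on_U U (\<lambda>z. f z / h z)"
  using smooth_mult[OF assms(1,3) smooth_inverse[OF assms(1,2,4)]] by (simp add: divide_inverse)

lemma smooth_sum:
  assumes "open U" "finite A" "\<forall>a\<in>A. smooth_on_U U (f a)"
  shows "smooth_on_U U (\<lambda>z. \<Sum>a\<in>A. f a z)"
  using assms(2,3)
proof (induction A rule: finite_induct)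
  case empty then show ?case using smooth_const by simp
next
  case (insert a A) then show ?case using smooth_add[OF assms(1)] by simp
qed

lemma smooth_prod:
  assumes "open U" "finite A" "\<forall>a\<in>A. smooth_on_U U (f a)"
  shows "smooth_on_U U (\<lambda>z. \<Prod>a\<in>A. f a z)"
  using assms(2,3)
proof (induction A rule: finite_induct)
  case empty then show ?case using smooth_const by simp
next
  case (insert a A) then show ?case using smooth_mult[OF assms(1)] by simp
qed




definition metric_ok :: "('n::finite) metric \<Rightarrow> real^'n \<Rightarrow> bool" where
  "metric_ok g x \<longleftrightarrow> (\<forall>a b. g a b x = g b a x) \<and> invertible (gmat g x)"

lemma lor_ok:
  assumes "lorentzian_at g x" shows "metric_ok g x"
proof -
  obtain P :: "real^'a^'a" and i0 where P: "invertible P"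
    and D: "\<forall>a b. (transpose P ** gmat g x ** P) $ a $ b = (if a = b then (if a = i0 then -1 else 1) else 0)"
    using assms unfolding lorentzian_at_def by blast
  have "det (transpose P ** gmat g x ** P) = (\<Prod>i\<in>UNIV. (transpose P ** gmat g x ** P) $ i $ i)"
    by (rule det_diagonal) (simp add: D)
  also have "\<dots> = (\<Prod>i\<in>UNIV. (if i = i0 then -1 else 1::real))" using D by simp
  finally have "det (transpose P ** gmat g x ** P) \<noteq> 0" by (simp add: prod.If_cases)
  then have "det (gmat g x) \<noteq> 0" by (simp add: det_mul)
  then show ?thesis using assms unfolding metric_ok_def lorentzian_at_def by (simp add: invertible_det_nz)
qed

lemma inv_props:
  fixes A :: "real^'n^'n"
  assumes "invertible A"
  shows "A ** matrix_inv A = mat 1" "matrix_inv A ** A = mat 1"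
proof -
  have "\<exists>A'. A ** A' = mat 1 \<and> A' ** A = mat 1" using assms unfolding invertible_def by blast
  then have "A ** matrix_inv A = mat 1 \<and> matrix_inv A ** A = mat 1"
    unfolding matrix_inv_def by (rule someI_ex)
  then show "A ** matrix_inv A = mat 1" "matrix_inv A ** A = mat 1" by auto
qed

lemma ginv_left:
  assumes "metric_ok g x"
  shows "(\<Sum>e\<in>UNIV. ginv g a e x * g e b x) = (if a = b then 1 else 0)"
proof -
  have "(matrix_inv (gmat g x) ** gmat g x) $ a $ b = (if a = b then 1 else 0)"
    using inv_props(2)[of "gmat g x"] assms unfolding metric_ok_def by (simp add: mat_def)
  then show ?thesis by (simp add: matrix_matrix_mult_def ginv_def gmat_def)
qed

lemma ginv_right:
  assumes "metric_ok g x"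
  shows "(\<Sum>e\<in>UNIV. g a e x * ginv g e b x) = (if a = b then 1 else 0)"
proof -
  have "(gmat g x ** matrix_inv (gmat g x)) $ a $ b = (if a = b then 1 else 0)"
    using inv_props(1)[of "gmat g x"] assms unfolding metric_ok_def by (simp add: mat_def)
  then show ?thesis by (simp add: matrix_matrix_mult_def ginv_def gmat_def)
qed

lemma ginv_sym:
  assumes "metric_ok g x"
  shows "ginv g a b x = ginv g b a x"
proof -
  let ?G = "gmat g x" let ?H = "matrix_inv ?G"
  have sym: "transpose ?G = ?G" using assms unfolding metric_ok_def
    by (simp add: transpose_def gmat_def vec_eq_iff)
  have i1: "?G ** ?H = mat 1" and i2: "?H ** ?G = mat 1"
    using inv_props assms unfolding metric_ok_def by auto
  have "?G ** transpose ?H = mat 1"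
    using arg_cong[OF i2, of transpose] sym by (simp add: matrix_transpose_mul)
  then have "?H ** (?G ** transpose ?H) = ?H" by simp
  then have "transpose ?H = ?H" by (simp add: matrix_mul_assoc i2)
  then have "transpose ?H $ a $ b = ?H $ a $ b" by simp
  then show ?thesis by (simp add: transpose_def ginv_def)
qed

lemma inv_cramer:
  fixes A :: "real^'n^'n"
  assumes "invertible A"
  shows "matrix_inv A $ a $ b = det (\<chi> i j. if j = a then axis b 1 $ i else A$i$j) / det A"
proof -
  have d: "det A \<noteq> 0" using assms invertible_det_nz by blast
  have "A *v (matrix_inv A *v axis b 1) = axis b 1"
    by (simp add: matrix_vector_mul_assoc inv_props(1)[OF assms])
  then have "matrix_inv A *v axis b 1 = (\<chi> k. det(\<chi> i j. if j=k then axis b 1 $ i else A$i$j) / det A)"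
    using cramer[OF d] by blast
  then have "(matrix_inv A *v axis b 1) $ a = det(\<chi> i j. if j=a then axis b 1 $ i else A$i$j) / det A"
    by simp
  moreover have "(matrix_inv A *v axis b 1) $ a = matrix_inv A $ a $ b"
    by (simp add: matrix_vector_mult_def axis_def if_distrib if_distribR cong: if_cong)
  ultimately show ?thesis by simp
qed

lemma smooth_det:
  fixes M :: "real^'n \<Rightarrow> real^'m::finite^'m"
  assumes "open U" "\<forall>i j. smooth_on_U U (\<lambda>y. M y $ i $ j)"
  shows "smooth_on_U U (\<lambda>y. det (M y))"
  unfolding det_def
  by (intro smooth_sum[OF assms(1)] ballI smooth_cmult[OF assms(1)] smooth_prod[OF assms(1)])
     (use assms(2) in auto)

lemma smooth_ginv:
  assumes "open U" "\<forall>y\<in>U. metric_ok g y" "\<forall>a b. smooth_on_U U (g a b)"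
  shows "smooth_on_U U (ginv g a b)"
proof -
  have eq: "\<forall>y\<in>U. det (\<chi> i j. if j = a then axis b 1 $ i else gmat g y $i$j) / det (gmat g y) = ginv g a b y"
  proof
    fix y assume "y \<in> U"
    then have "invertible (gmat g y)" using assms(2) unfolding metric_ok_def by blast
    from inv_cramer[OF this, of a b] show "det (\<chi> i j. if j = a then axis b 1 $ i else gmat g y $i$j) / det (gmat g y) = ginv g a b y"
      by (simp add: ginv_def)
  qed
  have nz: "\<forall>y\<in>U. det (gmat g y) \<noteq> 0" using assms(2) invertible_det_nz unfolding metric_ok_def by blast
  have s1: "smooth_on_U U (\<lambda>y. det (gmat g y))"
    by (rule smooth_det[OF assms(1)]) (simp add: gmat_def assms(3))
  have s2: "smooth_on_U U (\<lambda>y. det (\<chi> i j. if j = a then axis b 1 $ i else gmat g y $i$j))"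
  proof (rule smooth_det[OF assms(1)], intro allI)
    fix i j show "smooth_on_U U (\<lambda>y. (\<chi> i j. if j = a then axis b 1 $ i else gmat g y $i$j) $ i $ j)"
      by (cases "j = a") (simp_all add: gmat_def assms(3) smooth_const)
  qed
  show ?thesis
    by (rule smooth_on_U_cong[OF assms(1) eq]) (rule smooth_divide[OF assms(1) nz s2 s1])
qed




lemma line_deriv:
  fixes \<phi> :: "real^'n::finite \<Rightarrow> real"
  assumes "\<phi> differentiable (at (p + t *\<^sub>R e))"
  shows "((\<lambda>s. \<phi> (p + s *\<^sub>R e)) has_real_derivative frechet_derivative \<phi> (at (p + t *\<^sub>R e)) e) (at t)"
proof -
  let ?D = "frechet_derivative \<phi> (at (p + t *\<^sub>R e))"
  have l: "((\<lambda>s. p + s *\<^sub>R e) has_derivative (\<lambda>h. h *\<^sub>R e)) (at t)"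
    by (auto intro!: derivative_eq_intros)
  have d: "(\<phi> has_derivative ?D) (at (p + t *\<^sub>R e))" using assms frechet_derivative_works by blast
  have "((\<phi> \<circ> (\<lambda>s. p + s *\<^sub>R e)) has_derivative (?D \<circ> (\<lambda>h. h *\<^sub>R e))) (at t)"
    by (rule diff_chain_at[OF l]) (simp add: d)
  moreover have "(?D \<circ> (\<lambda>h. h *\<^sub>R e)) = (\<lambda>h. ?D e * h)"
    using linear_scale[OF has_derivative_linear[OF d]] by (auto simp: o_def mult.commute)
  ultimately show ?thesis unfolding has_field_derivative_def by (simp add: o_def)
qed

lemma line_pd:
  fixes \<phi> :: "real^'n::finite \<Rightarrow> real"
  assumes "\<phi> differentiable (at (p + t *\<^sub>R axis k 1))"
  shows "((\<lambda>s. \<phi> (p + s *\<^sub>R axis k 1)) has_real_derivative pd k \<phi> (p + t *\<^sub>R axis k 1)) (at t)"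
  using line_deriv[OF assms] unfolding pd_def .

lemma mvt2:
  fixes f :: "real^'n::finite \<Rightarrow> real"
  assumes U: "open U" "ball y r \<subseteq> U" "0 < h" "2*h < r"
    and df: "f differentiable_on U" and dfi: "pd i f differentiable_on U"
  shows "\<exists>\<xi>. dist \<xi> y < 2*h \<and>
     f (y + h *\<^sub>R axis i 1 + h *\<^sub>R axis j 1) - f (y + h *\<^sub>R axis i 1) - f (y + h *\<^sub>R axis j 1) + f y
       = h^2 * pd j (pd i f) \<xi>"
proof -
  let ?ei = "axis i (1::real)" and ?ej = "axis j (1::real)"
  have inU: "y + s *\<^sub>R ?ei + t *\<^sub>R ?ej \<in> U" if "0 \<le> s" "s \<le> h" "0 \<le> t" "t \<le> h" for s t
  proof -
    have "norm (s *\<^sub>R ?ei + t *\<^sub>R ?ej) \<le> norm (s *\<^sub>R ?ei) + norm (t *\<^sub>R ?ej)" by (rule norm_triangle_ineq)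
    also have "\<dots> = s + t" using that by simp
    finally have "dist (y + s *\<^sub>R ?ei + t *\<^sub>R ?ej) y < r" using that U(4) by (simp add: dist_norm)
    then show ?thesis using U(2) by (auto simp: dist_commute)
  qed
  have dfa: "\<forall>z\<in>U. f differentiable (at z)" using df differentiable_on_eq_differentiable_at[OF U(1)] by blast
  have dfia: "\<forall>z\<in>U. pd i f differentiable (at z)" using dfi differentiable_on_eq_differentiable_at[OF U(1)] by blast
  define u where "u s = f (y + h *\<^sub>R ?ej + s *\<^sub>R ?ei) - f (y + s *\<^sub>R ?ei)" for s
  have du: "DERIV u s :> (pd i f (y + h *\<^sub>R ?ej + s *\<^sub>R ?ei) - pd i f (y + s *\<^sub>R ?ei))" if "0 \<le> s" "s \<le> h" for s
  proof -
    have a: "y + h *\<^sub>R ?ej + s *\<^sub>R ?ei \<in> U" using inU[of s h] that U(3) by (simp add: algebra_simps)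
    have b: "y + s *\<^sub>R ?ei \<in> U" using inU[of s 0] that U(3) by simp
    show ?thesis unfolding u_def
      by (intro DERIV_diff line_pd) (use a b dfa in auto)
  qed
  obtain \<sigma> where \<sigma>: "0 < \<sigma>" "\<sigma> < h"
    "u h - u 0 = (h - 0) * (pd i f (y + h *\<^sub>R ?ej + \<sigma> *\<^sub>R ?ei) - pd i f (y + \<sigma> *\<^sub>R ?ei))"
    using MVT2[OF U(3) du] by auto
  define v where "v t = pd i f (y + \<sigma> *\<^sub>R ?ei + t *\<^sub>R ?ej)" for t
  have dv: "DERIV v t :> pd j (pd i f) (y + \<sigma> *\<^sub>R ?ei + t *\<^sub>R ?ej)" if "0 \<le> t" "t \<le> h" for t
  proof -
    have a: "y + \<sigma> *\<^sub>R ?ei + t *\<^sub>R ?ej \<in> U" using inU[of \<sigma> t] that \<sigma> by simp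
    show ?thesis unfolding v_def by (intro line_pd) (use a dfia in auto)
  qed
  obtain \<tau> where \<tau>: "0 < \<tau>" "\<tau> < h" "v h - v 0 = (h - 0) * pd j (pd i f) (y + \<sigma> *\<^sub>R ?ei + \<tau> *\<^sub>R ?ej)"
    using MVT2[OF U(3) dv] by auto
  have "f (y + h *\<^sub>R ?ei + h *\<^sub>R ?ej) - f (y + h *\<^sub>R ?ei) - f (y + h *\<^sub>R ?ej) + f y = u h - u 0"
    unfolding u_def by (simp add: algebra_simps)
  also have "\<dots> = h * (v h - v 0)" using \<sigma>(3) unfolding v_def by (simp add: algebra_simps)
  also have "\<dots> = h^2 * pd j (pd i f) (y + \<sigma> *\<^sub>R ?ei + \<tau> *\<^sub>R ?ej)" using \<tau>(3) by (simp add: power2_eq_square)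
  finally have eq: "f (y + h *\<^sub>R ?ei + h *\<^sub>R ?ej) - f (y + h *\<^sub>R ?ei) - f (y + h *\<^sub>R ?ej) + f y = h^2 * pd j (pd i f) (y + \<sigma> *\<^sub>R ?ei + \<tau> *\<^sub>R ?ej)" .
  have "norm (\<sigma> *\<^sub>R ?ei + \<tau> *\<^sub>R ?ej) \<le> norm (\<sigma> *\<^sub>R ?ei) + norm (\<tau> *\<^sub>R ?ej)" by (rule norm_triangle_ineq)
  also have "\<dots> = \<sigma> + \<tau>" using \<sigma> \<tau> by simp
  finally have "dist (y + \<sigma> *\<^sub>R ?ei + \<tau> *\<^sub>R ?ej) y < 2*h" using \<sigma> \<tau> by (simp add: dist_norm)
  then show ?thesis using eq by blast
qed

lemma abs_aux: "\<bar>A - a\<bar> < \<bar>b - a\<bar> / 2 \<Longrightarrow> \<bar>B - b\<bar> < \<bar>b - a\<bar> / 2 \<Longrightarrow> A = B \<Longrightarrow> False"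
  for A B a b :: real
  by (cases "a \<le> b"; cases "A \<le> a"; cases "B \<le> b") (simp_all add: abs_if split: if_splits)

lemma schwarz:
  fixes f :: "real^'n::finite \<Rightarrow> real"
  assumes U: "open U" "y \<in> U" and sf: "smooth_on_U U f"
  shows "pd i (pd j f) y = pd j (pd i f) y"
proof (rule ccontr)
  assume ne: "pd i (pd j f) y \<noteq> pd j (pd i f) y"
  define \<delta> where "\<delta> = \<bar>pd i (pd j f) y - pd j (pd i f) y\<bar> / 2"
  have \<delta>: "\<delta> > 0" using ne unfolding \<delta>_def by simp
  obtain r where r: "r > 0" "ball y r \<subseteq> U" using U open_contains_ball by blast
  have s2: "smooth_k 2 U f" using sf unfolding smooth_on_U_def by blast
  have df: "f differentiable_on U" and dfi: "pd i f differentiable_on U" and dfj: "pd j f differentiable_on U"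
    using s2 by (simp_all add: numeral_2_eq_2)
  have "continuous_on U (pd j (pd i f))" "continuous_on U (pd i (pd j f))"
    using s2 by (simp_all add: numeral_2_eq_2)
  then have c1: "isCont (pd j (pd i f)) y" and c2: "isCont (pd i (pd j f)) y"
    using continuous_on_eq_continuous_at[OF U(1)] U(2) by blast+
  obtain \<rho>1 where \<rho>1: "\<rho>1 > 0" "\<forall>z. dist z y < \<rho>1 \<longrightarrow> dist (pd j (pd i f) z) (pd j (pd i f) y) < \<delta>"
    using c1 \<delta> unfolding continuous_at_eps_delta by blast
  obtain \<rho>2 where \<rho>2: "\<rho>2 > 0" "\<forall>z. dist z y < \<rho>2 \<longrightarrow> dist (pd i (pd j f) z) (pd i (pd j f) y) < \<delta>"
    using c2 \<delta> unfolding continuous_at_eps_delta by blast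
  define h where "h = min r (min \<rho>1 \<rho>2) / 4"
  have h: "0 < h" "2*h < r" "2*h < \<rho>1" "2*h < \<rho>2" using r \<rho>1 \<rho>2 unfolding h_def by auto
  obtain \<xi> where \<xi>: "dist \<xi> y < 2*h"
    "f (y + h *\<^sub>R axis i 1 + h *\<^sub>R axis j 1) - f (y + h *\<^sub>R axis i 1) - f (y + h *\<^sub>R axis j 1) + f y
       = h^2 * pd j (pd i f) \<xi>"
    using mvt2[OF U(1) r(2) h(1,2) df dfi] by blast
  obtain \<zeta> where \<zeta>: "dist \<zeta> y < 2*h"
    "f (y + h *\<^sub>R axis j 1 + h *\<^sub>R axis i 1) - f (y + h *\<^sub>R axis j 1) - f (y + h *\<^sub>R axis i 1) + f y
       = h^2 * pd i (pd j f) \<zeta>"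
    using mvt2[OF U(1) r(2) h(1,2) df dfj] by blast
  have "h^2 * pd j (pd i f) \<xi> = h^2 * pd i (pd j f) \<zeta>"
    using \<xi>(2) \<zeta>(2) by (simp add: algebra_simps)
  then have eq: "pd j (pd i f) \<xi> = pd i (pd j f) \<zeta>" using h(1) by simp
  have a: "\<bar>pd j (pd i f) \<xi> - pd j (pd i f) y\<bar> < \<delta>" using \<rho>1(2) \<xi>(1) h(3) by (simp add: dist_real_def)
  have b: "\<bar>pd i (pd j f) \<zeta> - pd i (pd j f) y\<bar> < \<delta>" using \<rho>2(2) \<zeta>(1) h(4) by (simp add: dist_real_def)
  show False using abs_aux[OF a[unfolded \<delta>_def] b[unfolded \<delta>_def] eq] .
qed




definition good :: "('n::finite) metric \<Rightarrow> (real^'n) set \<Rightarrow> bool" where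
  "good g U \<longleftrightarrow> open U \<and> (\<forall>a b. smooth_on_U U (g a b)) \<and> (\<forall>y\<in>U. metric_ok g y)"

lemma good_open: "good g U \<Longrightarrow> open U" unfolding good_def by blast
lemma good_sm: "good g U \<Longrightarrow> smooth_on_U U (g a b)" unfolding good_def by blast
lemma good_ok: "good g U \<Longrightarrow> y \<in> U \<Longrightarrow> metric_ok g y" unfolding good_def by blast
lemma good_ginv: "good g U \<Longrightarrow> smooth_on_U U (ginv g a b)"
  unfolding good_def using smooth_ginv by blast

lemma g_sym: "good g U \<Longrightarrow> y \<in> U \<Longrightarrow> g a b y = g b a y"
  using good_ok unfolding metric_ok_def by blast

lemma pd_g_sym: "good g U \<Longrightarrow> y \<in> U \<Longrightarrow> pd k (g a b) y = pd k (g b a) y"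
  by (rule pd_cong[OF good_open]) (auto intro: g_sym)

lemma christoffel_fun:
  "christoffel g a b c = (\<lambda>x. (1/2) * (\<Sum>e\<in>UNIV. ginv g a e x *
      (pd b (g e c) x + pd c (g e b) x - pd e (g b c) x)))"
  by (rule ext) (simp add: christoffel_def)

lemma smooth_christoffel:
  assumes "good g U" shows "smooth_on_U U (christoffel g a b c)"
  unfolding christoffel_fun
  using good_open[OF assms] good_ginv[OF assms] good_sm[OF assms]
  by (intro smooth_cmult smooth_sum smooth_mult smooth_add smooth_diff smooth_pd ballI) auto

lemma riemann_up_fun:
  "riemann_up g a b c d = (\<lambda>x. pd c (christoffel g a d b) x - pd d (christoffel g a c b) x
     + (\<Sum>e\<in>UNIV. christoffel g a c e x * christoffel g e d b x
                 - christoffel g a d e x * christoffel g e c b x))"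
  by (rule ext) (simp add: riemann_up_def)

lemma smooth_riemann_up:
  assumes "good g U" shows "smooth_on_U U (riemann_up g a b c d)"
  unfolding riemann_up_fun
  using good_open[OF assms] smooth_christoffel[OF assms]
  by (intro smooth_sum smooth_mult smooth_add smooth_diff smooth_pd ballI) auto

lemma smooth_ricci:
  assumes "good g U" shows "smooth_on_U U (ricci g b d)"
proof -
  have "ricci g b d = (\<lambda>x. \<Sum>a\<in>UNIV. riemann_up g a b a d x)" by (rule ext) (simp add: ricci_def)
  then show ?thesis using good_open[OF assms] smooth_riemann_up[OF assms]
    by (simp add: smooth_sum)
qed

lemma smooth_scalar:
  assumes "good g U" shows "smooth_on_U U (scalar_curv g)"
proof -
  have "scalar_curv g = (\<lambda>x. \<Sum>b\<in>UNIV. \<Sum>d\<in>UNIV. ginv g b d x * ricci g b d x)"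
    by (rule ext) (simp add: scalar_curv_def)
  then show ?thesis using good_open[OF assms] smooth_ricci[OF assms] good_ginv[OF assms]
    by (simp add: smooth_sum smooth_mult)
qed

lemma gamma_sym:
  assumes "good g U" "y \<in> U"
  shows "christoffel g a b c y = christoffel g a c b y"
  unfolding christoffel_def using pd_g_sym[OF assms] by (simp add: algebra_simps)

lemma gamma_contract:
  assumes "good g U" "y \<in> U"
  shows "(\<Sum>e\<in>UNIV. christoffel g e c a y * g e b y)
       = (1/2) * (pd c (g b a) y + pd a (g b c) y - pd b (g c a) y)"
proof -
  define X where "X f = pd c (g f a) y + pd a (g f c) y - pd f (g c a) y" for f
  have ok: "metric_ok g y" using good_ok assms by blast
  have "(\<Sum>e\<in>UNIV. christoffel g e c a y * g e b y)
      = (\<Sum>e\<in>UNIV. \<Sum>f\<in>UNIV. (1/2) * X f * (ginv g e f y * g e b y))"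
    unfolding christoffel_def X_def by (simp add: sum_distrib_left sum_distrib_right mult_ac)
  also have "\<dots> = (\<Sum>f\<in>UNIV. \<Sum>e\<in>UNIV. (1/2) * X f * (ginv g f e y * g e b y))"
    by (subst sum.swap) (simp add: ginv_sym[OF ok])
  also have "\<dots> = (\<Sum>f\<in>UNIV. (1/2) * X f * (\<Sum>e\<in>UNIV. ginv g f e y * g e b y))"
    by (simp add: sum_distrib_left)
  also have "\<dots> = (1/2) * X b" by (simp add: ginv_left[OF ok] if_distrib if_distribR cong: if_cong)
  finally show ?thesis unfolding X_def .
qed

lemma metric_compat:
  assumes "good g U" "y \<in> U"
  shows "pd c (g a b) y = (\<Sum>e\<in>UNIV. christoffel g e c a y * g e b y + christoffel g e c b y * g a e y)"
proof -
  have "(\<Sum>e\<in>UNIV. christoffel g e c b y * g a e y) = (\<Sum>e\<in>UNIV. christoffel g e c b y * g e a y)"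
    using g_sym[OF assms] by metis
  then show ?thesis
    using gamma_contract[OF assms, of c a b] gamma_contract[OF assms, of c b a] pd_g_sym[OF assms]
    by (simp add: sum.distrib algebra_simps)
qed




definition nabT :: "('n::finite) metric \<Rightarrow> ('n \<Rightarrow> 'n \<Rightarrow> 'n \<Rightarrow> 'n \<Rightarrow> 'n field) \<Rightarrow> real^'n \<Rightarrow> 'n \<Rightarrow> 'n \<Rightarrow> 'n \<Rightarrow> 'n \<Rightarrow> 'n \<Rightarrow> real" where
  "nabT g T x e a b c d = pd e (T a b c d) x
     + (\<Sum>f\<in>UNIV. christoffel g a e f x * T f b c d x)
     - (\<Sum>f\<in>UNIV. T a f c d x * christoffel g f e b x)
     - (\<Sum>f\<in>UNIV. christoffel g f e c x * T a b f d x)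
     - (\<Sum>f\<in>UNIV. christoffel g f e d x * T a b c f x)"

definition nab2 :: "('n::finite) metric \<Rightarrow> 'n metric \<Rightarrow> real^'n \<Rightarrow> 'n \<Rightarrow> 'n \<Rightarrow> 'n \<Rightarrow> real" where
  "nab2 g F x c d b = pd c (F d b) x
     - (\<Sum>f\<in>UNIV. christoffel g f c d x * F f b x)
     - (\<Sum>f\<in>UNIV. christoffel g f c b x * F d f x)"

definition nabRic :: "('n::finite) metric \<Rightarrow> real^'n \<Rightarrow> 'n \<Rightarrow> 'n \<Rightarrow> 'n \<Rightarrow> real" where
  "nabRic g' x' p b q = pd p (ricci g' b q) x'
     - (\<Sum>f\<in>UNIV. christoffel g' f p b x' * ricci g' f q x')
     - (\<Sum>f\<in>UNIV. christoffel g' f p q x' * ricci g' b f x')"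

lemma riemann_up_antisym: "riemann_up g a b c d x = - riemann_up g a b d c x"
  unfolding riemann_up_def by (simp add: sum_subtractf algebra_simps)

locale pt =
  fixes g :: "('n::finite) metric" and U x
  assumes good: "good g U" and xU: "x \<in> U"
begin

lemma opn: "open U" using good good_open by blast

lemma dif: "smooth_on_U U F \<Longrightarrow> F differentiable (at x)"
  using smooth_diffable opn xU by blast

lemma smG: "smooth_on_U U (christoffel g a b c)" using smooth_christoffel good by blast

lemma dR_formula:
  "pd e (riemann_up g a b c d) x =
     pd e (pd c (christoffel g a d b)) x - pd e (pd d (christoffel g a c b)) x
     + (\<Sum>f\<in>UNIV. pd e (christoffel g a c f) x * christoffel g f d b x
          + christoffel g a c f x * pd e (christoffel g f d b) x
          - pd e (christoffel g a d f) x * christoffel g f c b x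
          - christoffel g a d f x * pd e (christoffel g f c b) x)"
proof -
  let ?A = "pd c (christoffel g a d b)" and ?B = "pd d (christoffel g a c b)"
  let ?t = "\<lambda>f y. christoffel g a c f y * christoffel g f d b y - christoffel g a d f y * christoffel g f c b y"
  have sA: "smooth_on_U U ?A" and sB: "smooth_on_U U ?B" using smooth_pd smG by blast+
  have st: "smooth_on_U U (?t f)" for f
    using smooth_diff[OF opn smooth_mult[OF opn smG[of a c f] smG[of f d b]] smooth_mult[OF opn smG[of a d f] smG[of f c b]]] by simp
  have sAB: "smooth_on_U U (\<lambda>y. ?A y - ?B y)" using smooth_diff[OF opn sA sB] .
  have sC: "smooth_on_U U (\<lambda>y. \<Sum>f\<in>UNIV. ?t f y)" by (rule smooth_sum[OF opn]) (use st in auto)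
  have "pd e (riemann_up g a b c d) x = pd e (\<lambda>y. (?A y - ?B y) + (\<Sum>f\<in>UNIV. ?t f y)) x"
    unfolding riemann_up_fun by simp
  also have "\<dots> = pd e ?A x - pd e ?B x + (\<Sum>f\<in>UNIV. pd e (?t f) x)"
    by (simp add: pd_add[OF dif[OF sAB] dif[OF sC]] pd_diff[OF dif[OF sA] dif[OF sB]]
          pd_sum dif[OF st])
  also have "(\<Sum>f\<in>UNIV. pd e (?t f) x) = (\<Sum>f\<in>UNIV. pd e (christoffel g a c f) x * christoffel g f d b x
          + christoffel g a c f x * pd e (christoffel g f d b) x
          - pd e (christoffel g a d f) x * christoffel g f c b x
          - christoffel g a d f x * pd e (christoffel g f c b) x)"
  proof (rule sum.cong[OF refl])
    fix f
    have m1: "(\<lambda>y. christoffel g a c f y * christoffel g f d b y) differentiable (at x)"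
      using dif[OF smooth_mult[OF opn smG[of a c f] smG[of f d b]]] by simp
    have m2: "(\<lambda>y. christoffel g a d f y * christoffel g f c b y) differentiable (at x)"
      using dif[OF smooth_mult[OF opn smG[of a d f] smG[of f c b]]] by simp
    show "pd e (?t f) x = pd e (christoffel g a c f) x * christoffel g f d b x
          + christoffel g a c f x * pd e (christoffel g f d b) x
          - pd e (christoffel g a d f) x * christoffel g f c b x
          - christoffel g a d f x * pd e (christoffel g f c b) x"
      using pd_diff[OF m1 m2, of e] pd_mult[OF dif[OF smG[of a c f]] dif[OF smG[of f d b]], of e]
        pd_mult[OF dif[OF smG[of a d f]] dif[OF smG[of f c b]], of e]
      by (simp add: algebra_simps)
  qed
  finally show ?thesis .
qed


lemma bianchi:
  "nabT g (riemann_up g) x e a b c d + nabT g (riemann_up g) x c a b d e + nabT g (riemann_up g) x d a b e c = 0"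
proof -
  define Gm where "Gm p q r = christoffel g p q r x" for p q r
  define D where "D p q r s = pd p (christoffel g q r s) x" for p q r s
  define S where "S p q r = pd p (pd q (christoffel g a r b)) x" for p q r
  define Q1 where "Q1 p q r = (\<Sum>f\<in>UNIV. D p a q f * Gm f r b)" for p q r
  define Q2 where "Q2 p q r = (\<Sum>f\<in>UNIV. Gm a q f * D p f r b)" for p q r
  define P where "P p q r = (\<Sum>f\<in>UNIV. \<Sum>h\<in>UNIV. Gm a p f * Gm f q h * Gm h r b)" for p q r
  define Tor where "Tor p q r = (\<Sum>f\<in>UNIV. Gm f p q * riemann_up g a b f r x)" for p q r
  have Rx: "riemann_up g p q r s x = D r p s q - D s p r q + (\<Sum>h\<in>UNIV. Gm p r h * Gm h s q - Gm p s h * Gm h r q)" for p q r s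
    unfolding riemann_up_def D_def Gm_def by simp
  have dR: "pd p (riemann_up g a b q r) x = S p q r - S p r q + Q1 p q r + Q2 p q r - Q1 p r q - Q2 p r q" for p q r
    unfolding dR_formula S_def Q1_def Q2_def D_def Gm_def by (simp add: sum.distrib sum_subtractf)
  have GR: "(\<Sum>f\<in>UNIV. Gm a p f * riemann_up g f b q r x) = Q2 q p r - Q2 r p q + P p q r - P p r q" for p q r
    unfolding Rx Q2_def P_def by (simp add: ring_distribs sum.distrib sum_subtractf sum_distrib_left mult_ac)
  have swp: "(\<Sum>f\<in>UNIV. \<Sum>h\<in>UNIV. Gm a q h * Gm h r f * Gm f p b) = P q r p" for p q r
    unfolding P_def by (rule sum.swap)
  have RG: "(\<Sum>f\<in>UNIV. riemann_up g a f q r x * Gm f p b) = Q1 q r p - Q1 r q p + P q r p - P r q p" for p q r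
  proof -
    have "(\<Sum>f\<in>UNIV. riemann_up g a f q r x * Gm f p b)
       = Q1 q r p - Q1 r q p + (\<Sum>f\<in>UNIV. \<Sum>h\<in>UNIV. Gm a q h * Gm h r f * Gm f p b)
           - (\<Sum>f\<in>UNIV. \<Sum>h\<in>UNIV. Gm a r h * Gm h q f * Gm f p b)"
      unfolding Rx Q1_def by (simp add: ring_distribs sum.distrib sum_subtractf sum_distrib_right sum_distrib_left mult_ac)
    then show ?thesis using swp[of q r p] swp[of r q p] by simp
  qed
  have Ssym: "S p q r = S q p r" for p q r
    unfolding S_def using schwarz[OF opn xU smG] by simp
  have Gsym: "Gm p q r = Gm p r q" for p q r unfolding Gm_def using gamma_sym[OF good xU] by simp
  have Tsym: "Tor p q r = Tor q p r" for p q r unfolding Tor_def using Gsym by simp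
  have T2: "(\<Sum>f\<in>UNIV. Gm f p q * riemann_up g a b r f x) = - Tor p q r" for p q r
    unfolding Tor_def using riemann_up_antisym[of g a b r _ x] by (simp add: sum_negf[symmetric])
  have nT: "nabT g (riemann_up g) x p a b q r =
      (S p q r - S p r q + Q1 p q r + Q2 p q r - Q1 p r q - Q2 p r q)
      + (Q2 q p r - Q2 r p q + P p q r - P p r q)
      - (Q1 q r p - Q1 r q p + P q r p - P r q p) - Tor p q r + Tor p r q" for p q r
    unfolding nabT_def dR GR[unfolded Gm_def] RG[unfolded Gm_def] T2[unfolded Gm_def, of p r q]
    using T2[of p r q] by (simp add: Tor_def Gm_def)
  show ?thesis unfolding nT using Ssym Tsym by (smt (verit))
qed


lemma smR: "smooth_on_U U (riemann_up g a b c d)" using smooth_riemann_up good by blast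

lemma pd_sumR: "(\<Sum>a\<in>(UNIV::'n set). pd p (riemann_up g (h a) b (k1 a) (k2 a)) x) = pd p (\<lambda>y. \<Sum>a\<in>UNIV. riemann_up g (h a) b (k1 a) (k2 a) y) x"
  by (rule pd_sum[symmetric]) (auto intro: dif smR)

lemma ricci_neg: "(\<lambda>y. \<Sum>a\<in>UNIV. riemann_up g a b d a y) = (\<lambda>y. (-1) * ricci g b d y)"
  unfolding ricci_def using riemann_up_antisym[of g _ b d] by (simp add: sum_negf[symmetric])

lemma sumC: "(\<Sum>a\<in>UNIV. nabT g (riemann_up g) x p a b d a) = - nabRic g x p b d"
proof -
  have s1: "(\<Sum>a\<in>UNIV. pd p (riemann_up g a b d a) x) = - pd p (ricci g b d) x"
    using pd_sumR[of p "\<lambda>a. a" b "\<lambda>_. d" "\<lambda>a. a"] unfolding ricci_neg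
    using pd_cmult[OF dif[OF smooth_ricci[OF good]], of p "-1" b d] by simp
  have s2: "(\<Sum>a\<in>UNIV. \<Sum>f\<in>UNIV. christoffel g a p f x * riemann_up g f b d a x)
      = (\<Sum>a\<in>UNIV. \<Sum>f\<in>UNIV. christoffel g f p a x * riemann_up g a b d f x)"
    by (rule sum.swap)
  have s3: "(\<Sum>a\<in>UNIV. \<Sum>f\<in>UNIV. riemann_up g a f d a x * christoffel g f p b x)
      = - (\<Sum>f\<in>UNIV. christoffel g f p b x * ricci g f d x)"
    apply (subst sum.swap) unfolding ricci_def
    using riemann_up_antisym[of g _ _ d _ x] by (simp add: sum_negf[symmetric] sum_distrib_left sum_distrib_right mult_ac)
  have s4: "(\<Sum>a\<in>UNIV. \<Sum>f\<in>UNIV. christoffel g f p d x * riemann_up g a b f a x)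
      = - (\<Sum>f\<in>UNIV. christoffel g f p d x * ricci g b f x)"
  proof -
    have r: "(\<Sum>a\<in>UNIV. riemann_up g a b f a x) = - ricci g b f x" for f
      using fun_cong[OF ricci_neg[of b f], of x] by simp
    have "(\<Sum>a\<in>UNIV. \<Sum>f\<in>UNIV. christoffel g f p d x * riemann_up g a b f a x)
       = (\<Sum>f\<in>UNIV. christoffel g f p d x * (\<Sum>a\<in>UNIV. riemann_up g a b f a x))"
      by (subst sum.swap) (simp add: sum_distrib_left)
    then show ?thesis unfolding r by (simp add: sum_negf)
  qed
  show ?thesis
    unfolding nabT_def nabRic_def using s1 s2 s3 s4 by (simp add: sum_subtractf sum.distrib)
qed

lemma sumD: "(\<Sum>a\<in>UNIV. nabT g (riemann_up g) x p a b a q) = nabRic g x p b q"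
proof -
  have s1: "(\<Sum>a\<in>UNIV. pd p (riemann_up g a b a q) x) = pd p (ricci g b q) x"
    using pd_sumR[of p "\<lambda>a. a" b "\<lambda>a. a" "\<lambda>_. q"] unfolding ricci_def by (simp add: ricci_def[abs_def])
  have s2: "(\<Sum>a\<in>UNIV. \<Sum>f\<in>UNIV. christoffel g a p f x * riemann_up g f b a q x)
      = (\<Sum>a\<in>UNIV. \<Sum>f\<in>UNIV. christoffel g f p a x * riemann_up g a b f q x)"
    by (rule sum.swap)
  have s3: "(\<Sum>a\<in>UNIV. \<Sum>f\<in>UNIV. riemann_up g a f a q x * christoffel g f p b x)
      = (\<Sum>f\<in>UNIV. christoffel g f p b x * ricci g f q x)"
    apply (subst sum.swap) unfolding ricci_def by (simp add: sum_distrib_left sum_distrib_right mult_ac)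
  have s4: "(\<Sum>a\<in>UNIV. \<Sum>f\<in>UNIV. christoffel g f p q x * riemann_up g a b a f x)
      = (\<Sum>f\<in>UNIV. christoffel g f p q x * ricci g b f x)"
    apply (subst sum.swap) unfolding ricci_def by (simp add: sum_distrib_left sum_distrib_right mult_ac)
  show ?thesis
    unfolding nabT_def nabRic_def using s1 s2 s3 s4 by (simp add: sum_subtractf sum.distrib)
qed

lemma contracted_bianchi:
  "(\<Sum>a\<in>UNIV. nabT g (riemann_up g) x a a b c d) = nabRic g x c b d - nabRic g x d b c"
proof -
  have "(\<Sum>a\<in>UNIV. nabT g (riemann_up g) x a a b c d + nabT g (riemann_up g) x c a b d a + nabT g (riemann_up g) x d a b a c) = 0"
    using bianchi by simp
  then show ?thesis using sumC[of c b d] sumD[of d b c] by (simp add: sum.distrib)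
qed

end



definition TH :: "('n::finite) metric \<Rightarrow> 'n \<Rightarrow> 'n \<Rightarrow> 'n \<Rightarrow> 'n \<Rightarrow> 'n field" where
  "TH H a b c d = (\<lambda>y. (if a = c then 1 else 0) * H d b y - (if a = d then 1 else 0) * H c b y)"

definition TQ :: "('n::finite) metric \<Rightarrow> 'n metric \<Rightarrow> 'n \<Rightarrow> 'n \<Rightarrow> 'n \<Rightarrow> 'n \<Rightarrow> 'n field" where
  "TQ g Q a b c d = (\<lambda>y. g b c y * Q a d y - g b d y * Q a c y)"

lemma ifz1: "(if P then 1 else 0) * (y::real) = (if P then y else 0)" by simp
lemma ifz2: "(y::real) * (if P then z else 0) = (if P then y * z else 0)" by simp
lemma ifz3: "(if P then z else 0) * (y::real) = (if P then z * y else 0)" by simp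
lemma ifz4: "(\<Sum>f\<in>A. if P then h f else (0::real)) = (if P then (\<Sum>f\<in>A. h f) else 0)" by simp
lemmas ifz = ifz1 ifz2 ifz3 ifz4 sum.delta sum.delta'

definition Zf :: "('n::finite) metric \<Rightarrow> 'n metric \<Rightarrow> real^'n \<Rightarrow> 'n \<Rightarrow> real" where
  "Zf g Q x p = (\<Sum>a\<in>UNIV. pd a (Q a p) x + (\<Sum>f\<in>UNIV. christoffel g a a f x * Q f p x)
      - (\<Sum>f\<in>UNIV. christoffel g f a p x * Q a f x))"

context pt
begin

lemma nabT_cong:
  assumes "\<forall>a b c d. \<forall>y\<in>U. T a b c d y = T' a b c d y"
  shows "nabT g T x e a b c d = nabT g T' x e a b c d"
proof -
  have "pd e (T a b c d) x = pd e (T' a b c d) x"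
    by (rule pd_cong[OF opn xU]) (use assms in auto)
  moreover have "T p q r s x = T' p q r s x" for p q r s using assms xU by blast
  ultimately show ?thesis unfolding nabT_def by simp
qed

lemma nabT_add:
  assumes "\<forall>a b c d. smooth_on_U U (T1 a b c d)" "\<forall>a b c d. smooth_on_U U (T2 a b c d)"
  shows "nabT g (\<lambda>a b c d y. T1 a b c d y + T2 a b c d y) x e a b c d = nabT g T1 x e a b c d + nabT g T2 x e a b c d"
  unfolding nabT_def using pd_add[OF dif dif] assms
  by (simp add: sum.distrib algebra_simps)

lemma nabT_TH:
  assumes sH: "\<forall>p q. smooth_on_U U (H p q)"
  shows "(\<Sum>a\<in>UNIV. nabT g (TH H) x a a b c d) = nab2 g H x c d b - nab2 g H x d c b"
proof -
  have p1: "pd a (TH H a b c d) x = (if a = c then 1 else 0) * pd a (H d b) x - (if a = d then 1 else 0) * pd a (H c b) x" for a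
  proof -
    have "pd a (TH H a b c d) x = pd a (\<lambda>y. (if a = c then 1 else 0) * H d b y) x - pd a (\<lambda>y. (if a = d then 1 else 0) * H c b y) x"
      unfolding TH_def by (rule pd_diff) (use dif sH smooth_cmult[OF opn] in auto)
    then show ?thesis using pd_cmult[OF dif, of "H d b"] pd_cmult[OF dif, of "H c b"] sH by simp
  qed
  have q1: "(\<Sum>a\<in>UNIV. pd a (TH H a b c d) x) = pd c (H d b) x - pd d (H c b) x"
    unfolding p1 by (simp add: sum_subtractf ifz)
  have q2: "(\<Sum>a\<in>UNIV. \<Sum>f\<in>UNIV. christoffel g a a f x * TH H f b c d x)
     = (\<Sum>a\<in>UNIV. christoffel g a a c x) * H d b x - (\<Sum>a\<in>UNIV. christoffel g a a d x) * H c b x"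
    unfolding TH_def by (simp add: right_diff_distrib sum_subtractf ifz sum_distrib_right)
  have q3: "(\<Sum>a\<in>UNIV. \<Sum>f\<in>UNIV. TH H a f c d x * christoffel g f a b x)
     = (\<Sum>f\<in>UNIV. H d f x * christoffel g f c b x) - (\<Sum>f\<in>UNIV. H c f x * christoffel g f d b x)"
    unfolding TH_def by (subst sum.swap) (simp add: left_diff_distrib sum_subtractf ifz)
  have q4: "(\<Sum>a\<in>UNIV. \<Sum>f\<in>UNIV. christoffel g f a c x * TH H a b f d x)
     = (\<Sum>a\<in>UNIV. christoffel g a a c x) * H d b x - (\<Sum>f\<in>UNIV. christoffel g f d c x * H f b x)"
    unfolding TH_def by (simp add: right_diff_distrib sum_subtractf ifz sum_distrib_right)
  have q5: "(\<Sum>a\<in>UNIV. \<Sum>f\<in>UNIV. christoffel g f a d x * TH H a b c f x)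
     = (\<Sum>f\<in>UNIV. christoffel g f c d x * H f b x) - (\<Sum>a\<in>UNIV. christoffel g a a d x) * H c b x"
    unfolding TH_def by (simp add: right_diff_distrib sum_subtractf ifz sum_distrib_right)
  have "(\<Sum>a\<in>UNIV. nabT g (TH H) x a a b c d) =
      pd c (H d b) x - pd d (H c b) x
      + ((\<Sum>a\<in>UNIV. christoffel g a a c x) * H d b x - (\<Sum>a\<in>UNIV. christoffel g a a d x) * H c b x)
      - ((\<Sum>f\<in>UNIV. H d f x * christoffel g f c b x) - (\<Sum>f\<in>UNIV. H c f x * christoffel g f d b x))
      - ((\<Sum>a\<in>UNIV. christoffel g a a c x) * H d b x - (\<Sum>f\<in>UNIV. christoffel g f d c x * H f b x))
      - ((\<Sum>f\<in>UNIV. christoffel g f c d x * H f b x) - (\<Sum>a\<in>UNIV. christoffel g a a d x) * H c b x)"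
    unfolding nabT_def sum_subtractf sum.distrib q1 q2 q3 q4 q5 ..
  also have "\<dots> = nab2 g H x c d b - nab2 g H x d c b"
    unfolding nab2_def using gamma_sym[OF good xU] by (simp add: sum_subtractf algebra_simps)
  finally show ?thesis .
qed


lemma nabT_TQ:
  assumes sQ: "\<forall>p q. smooth_on_U U (Q p q)"
  shows "(\<Sum>a\<in>UNIV. nabT g (TQ g Q) x a a b c d) = g b c x * Zf g Q x d - g b d x * Zf g Q x c"
proof -
  let ?G = "\<lambda>p q r. christoffel g p q r x"
  define A1 where "A1 = (\<Sum>a\<in>UNIV. \<Sum>f\<in>UNIV. ?G f a b * g f c x * Q a d x)"
  define A2 where "A2 = (\<Sum>a\<in>UNIV. \<Sum>f\<in>UNIV. ?G f a c * g b f x * Q a d x)"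
  define A3 where "A3 = (\<Sum>a\<in>UNIV. \<Sum>f\<in>UNIV. ?G f a b * g f d x * Q a c x)"
  define A4 where "A4 = (\<Sum>a\<in>UNIV. \<Sum>f\<in>UNIV. ?G f a d * g b f x * Q a c x)"
  define B1 where "B1 = (\<Sum>a\<in>UNIV. pd a (Q a d) x)"
  define B2 where "B2 = (\<Sum>a\<in>UNIV. pd a (Q a c) x)"
  define C1 where "C1 = (\<Sum>a\<in>UNIV. \<Sum>f\<in>UNIV. ?G a a f * Q f d x)"
  define C2 where "C2 = (\<Sum>a\<in>UNIV. \<Sum>f\<in>UNIV. ?G a a f * Q f c x)"
  define E1 where "E1 = (\<Sum>a\<in>UNIV. \<Sum>f\<in>UNIV. ?G f a c * Q a f x)"
  define E2 where "E2 = (\<Sum>a\<in>UNIV. \<Sum>f\<in>UNIV. ?G f a d * Q a f x)"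
  have sg: "smooth_on_U U (g p q)" for p q using good_sm[OF good] .
  have pdT: "pd a (TQ g Q a b c d) x = (g b c x * pd a (Q a d) x + pd a (g b c) x * Q a d x)
       - (g b d x * pd a (Q a c) x + pd a (g b d) x * Q a c x)" for a
  proof -
    have "pd a (TQ g Q a b c d) x = pd a (\<lambda>y. g b c y * Q a d y) x - pd a (\<lambda>y. g b d y * Q a c y) x"
      unfolding TQ_def by (rule pd_diff) (use dif smooth_mult[OF opn sg] sQ in auto)
    then show ?thesis using pd_mult[OF dif[OF sg] dif, of "Q a d"] pd_mult[OF dif[OF sg] dif, of "Q a c"] sQ
      by simp
  qed
  have r1: "(\<Sum>a\<in>UNIV. pd a (TQ g Q a b c d) x) = A1 + A2 + g b c x * B1 - A3 - A4 - g b d x * B2"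
    unfolding pdT metric_compat[OF good xU] A1_def A2_def A3_def A4_def B1_def B2_def
    using g_sym[OF good xU]
    by (simp add: algebra_simps sum_subtractf sum.distrib sum_distrib_left sum_distrib_right)
  have r2: "(\<Sum>a\<in>UNIV. \<Sum>f\<in>UNIV. ?G a a f * TQ g Q f b c d x) = g b c x * C1 - g b d x * C2"
    unfolding TQ_def C1_def C2_def
    by (simp add: algebra_simps sum_subtractf sum.distrib sum_distrib_left sum_distrib_right)
  have r3: "(\<Sum>a\<in>UNIV. \<Sum>f\<in>UNIV. TQ g Q a f c d x * ?G f a b) = A1 - A3"
    unfolding TQ_def A1_def A3_def
    by (simp add: algebra_simps sum_subtractf sum.distrib sum_distrib_left sum_distrib_right)
  have r4: "(\<Sum>a\<in>UNIV. \<Sum>f\<in>UNIV. ?G f a c * TQ g Q a b f d x) = A2 - g b d x * E1"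
    unfolding TQ_def A2_def E1_def
    by (simp add: algebra_simps sum_subtractf sum.distrib sum_distrib_left sum_distrib_right)
  have r5: "(\<Sum>a\<in>UNIV. \<Sum>f\<in>UNIV. ?G f a d * TQ g Q a b c f x) = g b c x * E2 - A4"
    unfolding TQ_def A4_def E2_def
    by (simp add: algebra_simps sum_subtractf sum.distrib sum_distrib_left sum_distrib_right)
  have Zd: "Zf g Q x d = B1 + C1 - E2" and Zc: "Zf g Q x c = B2 + C2 - E1"
    unfolding Zf_def B1_def C1_def E2_def B2_def C2_def E1_def by (simp_all add: sum.distrib sum_subtractf)
  have "(\<Sum>a\<in>UNIV. nabT g (TQ g Q) x a a b c d)
     = (A1 + A2 + g b c x * B1 - A3 - A4 - g b d x * B2) + (g b c x * C1 - g b d x * C2)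
       - (A1 - A3) - (A2 - g b d x * E1) - (g b c x * E2 - A4)"
    unfolding nabT_def sum_subtractf sum.distrib r1 r2 r3 r4 r5 ..
  then show ?thesis unfolding Zd Zc by (simp add: algebra_simps)
qed

end



definition KK :: "('n::finite) metric \<Rightarrow> 'n metric \<Rightarrow> real^'n \<Rightarrow> real^'n \<Rightarrow> real^'n \<Rightarrow> real^'n \<Rightarrow> real" where
  "KK g F x W A B = (\<Sum>b\<in>UNIV. \<Sum>c\<in>UNIV. \<Sum>d\<in>UNIV. W$b * A$c * B$d * (nab2 g F x c d b - nab2 g F x d c b))"

lemma quotient_trick:
  fixes ev hv lv lw :: "real^'n::finite \<Rightarrow> real"
  assumes U: "open U" "x \<in> U"
    and s: "smooth_on_U U ev" "smooth_on_U U hv" "smooth_on_U U lv" "smooth_on_U U lw"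
    and e: "\<forall>y\<in>U. ev y = et y * lw y * lv y" "\<forall>y\<in>U. hv y = et y * lw y * lw y"
    and x: "lw x = 1" "lv x = 0"
  shows "pd c ev x = et x * pd c lv x"
proof -
  define V where "V = lw -` (UNIV - {0}) \<inter> U"
  have oV: "open V" unfolding V_def
    using continuous_on_open_vimage[OF U(1)] smooth_cont[OF s(4)] by blast
  have xV: "x \<in> V" unfolding V_def using x U by simp
  have eqV: "\<forall>y\<in>V. ev y = (hv y * lv y) * inverse (lw y)"
    using e unfolding V_def by (auto simp: field_simps)
  have d1: "(\<lambda>y. hv y * lv y) differentiable (at x)"
    using smooth_diffable[OF smooth_mult[OF U(1) s(2) s(3)] U] by simp
  have dlw: "lw differentiable (at x)" using smooth_diffable[OF s(4) U] .
  have d2: "(\<lambda>y. inverse (lw y)) differentiable (at x)"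
    using differentiable_inverse[OF dlw] x by simp
  have "pd c ev x = pd c (\<lambda>y. (hv y * lv y) * inverse (lw y)) x"
    by (rule pd_cong[OF oV xV eqV])
  also have "\<dots> = (hv x * lv x) * pd c (\<lambda>y. inverse (lw y)) x + pd c (\<lambda>y. hv y * lv y) x * inverse (lw x)"
    using pd_mult[OF d1 d2] by simp
  also have "\<dots> = hv x * pd c lv x"
    using pd_mult[OF smooth_diffable[OF s(2) U] smooth_diffable[OF s(3) U]] x by simp
  finally show ?thesis using e(2) U(2) x by simp
qed

lemma gdot_raise:
  assumes "metric_ok g x"
  shows "gdot g x (raise g l x) v = (\<Sum>b\<in>UNIV. v$b * l b x)"
proof -
  have "gdot g x (raise g l x) v = (\<Sum>a\<in>UNIV. \<Sum>b\<in>UNIV. \<Sum>c\<in>UNIV. v$b * l c x * (ginv g c a x * g a b x))"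
    unfolding gdot_def raise_def using ginv_sym[OF assms]
    by (simp add: sum_distrib_left sum_distrib_right mult_ac)
  also have "\<dots> = (\<Sum>b\<in>UNIV. \<Sum>a\<in>UNIV. \<Sum>c\<in>UNIV. v$b * l c x * (ginv g c a x * g a b x))"
    by (rule sum.swap)
  also have "\<dots> = (\<Sum>b\<in>UNIV. \<Sum>c\<in>UNIV. \<Sum>a\<in>UNIV. v$b * l c x * (ginv g c a x * g a b x))"
    by (rule sum.cong[OF refl], rule sum.swap)
  also have "\<dots> = (\<Sum>b\<in>UNIV. \<Sum>c\<in>UNIV. v$b * l c x * (\<Sum>a\<in>UNIV. ginv g c a x * g a b x))"
    by (simp add: sum_distrib_left)
  also have "\<dots> = (\<Sum>b\<in>UNIV. v$b * l b x)"
    by (simp add: ginv_left[OF assms] ifz)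
  finally show ?thesis .
qed

context pt
begin

lemma nab2_add:
  assumes "\<forall>p q. smooth_on_U U (F1 p q)" "\<forall>p q. smooth_on_U U (F2 p q)"
  shows "nab2 g (\<lambda>p q y. F1 p q y + F2 p q y) x c d b = nab2 g F1 x c d b + nab2 g F2 x c d b"
  unfolding nab2_def using pd_add[OF dif dif] assms
  by (simp add: sum.distrib algebra_simps)

lemma nab2_cmult:
  assumes "\<forall>p q. smooth_on_U U (F p q)"
  shows "nab2 g (\<lambda>p q y. k * F p q y) x c d b = k * nab2 g F x c d b"
  unfolding nab2_def using pd_cmult[OF dif] assms
  by (simp add: sum_distrib_left algebra_simps)

lemma nab2_cong:
  assumes "\<forall>p q. \<forall>y\<in>U. F p q y = F' p q y"
  shows "nab2 g F x c d b = nab2 g F' x c d b"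
proof -
  have "pd c (F d b) x = pd c (F' d b) x" by (rule pd_cong[OF opn xU]) (use assms in auto)
  moreover have "F p q x = F' p q x" for p q using assms xU by blast
  ultimately show ?thesis unfolding nab2_def by simp
qed

lemma nab2_phig:
  assumes "smooth_on_U U \<phi>"
  shows "nab2 g (\<lambda>p q y. \<phi> y * g p q y) x c d b = pd c \<phi> x * g d b x"
proof -
  have "pd c (\<lambda>y. \<phi> y * g d b y) x = \<phi> x * pd c (g d b) x + pd c \<phi> x * g d b x"
    using pd_mult[OF dif[OF assms] dif[OF good_sm[OF good]]] .
  then show ?thesis unfolding nab2_def metric_compat[OF good xU]
    using g_sym[OF good xU] by (simp add: sum.distrib sum_distrib_left algebra_simps)
qed

lemma sumaux: "(\<Sum>b\<in>UNIV. X b * S1 - S2 * Y b) = (\<Sum>b\<in>UNIV. X b) * S1 - S2 * (\<Sum>b\<in>UNIV. Y b)"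
  for X Y :: "'a::finite \<Rightarrow> real"
  by (simp add: sum_subtractf sum_distrib_left sum_distrib_right)

lemma KK_zero:
  assumes "(\<Sum>b\<in>UNIV. \<Sum>c\<in>UNIV. g b c x * W$b * A$c) = 0" "(\<Sum>b\<in>UNIV. \<Sum>c\<in>UNIV. g b c x * W$b * B$c) = 0"
  shows "(\<Sum>b\<in>UNIV. \<Sum>c\<in>UNIV. \<Sum>d\<in>UNIV. W$b * A$c * B$d * (g b c x * Z d - g b d x * Z c)) = 0"
proof -
  have pb: "(\<Sum>c\<in>UNIV. \<Sum>d\<in>UNIV. W$b * A$c * B$d * (g b c x * Z d - g b d x * Z c))
     = (\<Sum>c\<in>UNIV. g b c x * W$b * A$c) * (\<Sum>d\<in>UNIV. B$d * Z d)
       - (\<Sum>c\<in>UNIV. A$c * Z c) * (\<Sum>d\<in>UNIV. g b d x * W$b * B$d)" for b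
    unfolding sum_product by (simp add: sum_subtractf algebra_simps)
  have "(\<Sum>b\<in>UNIV. \<Sum>c\<in>UNIV. \<Sum>d\<in>UNIV. W$b * A$c * B$d * (g b c x * Z d - g b d x * Z c))
     = (\<Sum>b\<in>UNIV. \<Sum>c\<in>UNIV. g b c x * W$b * A$c) * (\<Sum>d\<in>UNIV. B$d * Z d)
       - (\<Sum>c\<in>UNIV. A$c * Z c) * (\<Sum>b\<in>UNIV. \<Sum>d\<in>UNIV. g b d x * W$b * B$d)"
    unfolding pb by (rule sumaux)
  then show ?thesis using assms by simp
qed

lemma KK_phig:
  assumes "smooth_on_U U \<phi>"
    "(\<Sum>b\<in>UNIV. \<Sum>c\<in>UNIV. g b c x * W$b * A$c) = 0" "(\<Sum>b\<in>UNIV. \<Sum>c\<in>UNIV. g b c x * W$b * B$c) = 0"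
  shows "KK g (\<lambda>p q y. \<phi> y * g p q y) x W A B = 0"
proof -
  have "KK g (\<lambda>p q y. \<phi> y * g p q y) x W A B =
     (\<Sum>b\<in>UNIV. \<Sum>c\<in>UNIV. \<Sum>d\<in>UNIV. W$b * A$c * B$d * (g b c x * (- pd d \<phi> x) - g b d x * (- pd c \<phi> x)))"
    unfolding KK_def nab2_phig[OF assms(1)] using g_sym[OF good xU] by (simp add: algebra_simps)
  also have "\<dots> = 0" by (rule KK_zero[OF assms(2,3)])
  finally show ?thesis .
qed


lemma nab2E:
  assumes sE: "\<forall>p q. smooth_on_U U (E p q)" and sl: "\<forall>p. smooth_on_U U (l p)"
    and hE: "\<forall>y\<in>U. \<forall>p q. E p q y = et y * l p y * l q y"
    and lV: "(\<Sum>d\<in>UNIV. V$d * l d x) = 0" and lW: "(\<Sum>b\<in>UNIV. W$b * l b x) = 1"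
  shows "(\<Sum>b\<in>UNIV. \<Sum>c\<in>UNIV. \<Sum>d\<in>UNIV. W$b * P$c * V$d * nab2 g E x c d b)
       = et x * (\<Sum>c\<in>UNIV. \<Sum>d\<in>UNIV. P$c * V$d * cov_deriv g l c d x)"
proof -
  define ev where "ev y = (\<Sum>d\<in>UNIV. \<Sum>b\<in>UNIV. V$d * W$b * E d b y)" for y
  define hv where "hv y = (\<Sum>d\<in>UNIV. \<Sum>b\<in>UNIV. W$d * W$b * E d b y)" for y
  define lv where "lv y = (\<Sum>d\<in>UNIV. V$d * l d y)" for y
  define lw where "lw y = (\<Sum>b\<in>UNIV. W$b * l b y)" for y
  have sEv: "smooth_on_U U (\<lambda>y. \<Sum>b\<in>UNIV. k b * E d b y)" for d k
    by (rule smooth_sum[OF opn]) (use smooth_cmult[OF opn] sE in auto)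
  have sev: "smooth_on_U U ev" unfolding ev_def
    by (rule smooth_sum[OF opn]) (simp, intro ballI sEv)
  have shv: "smooth_on_U U hv" unfolding hv_def
    by (rule smooth_sum[OF opn]) (simp, intro ballI sEv)
  have slv: "smooth_on_U U lv" unfolding lv_def
    by (rule smooth_sum[OF opn]) (use smooth_cmult[OF opn] sl in auto)
  have slw: "smooth_on_U U lw" unfolding lw_def
    by (rule smooth_sum[OF opn]) (use smooth_cmult[OF opn] sl in auto)
  have eev: "\<forall>y\<in>U. ev y = et y * lw y * lv y"
  proof
    fix y assume "y \<in> U"
    then have "ev y = (\<Sum>d\<in>UNIV. \<Sum>b\<in>UNIV. et y * ((V$d * l d y) * (W$b * l b y)))"
      unfolding ev_def using hE by (simp add: mult_ac)
    also have "\<dots> = et y * (lv y * lw y)" unfolding lv_def lw_def sum_product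
      by (simp add: sum_distrib_left)
    finally show "ev y = et y * lw y * lv y" by simp
  qed
  have ehv: "\<forall>y\<in>U. hv y = et y * lw y * lw y"
  proof
    fix y assume "y \<in> U"
    then have "hv y = (\<Sum>d\<in>UNIV. \<Sum>b\<in>UNIV. et y * ((W$d * l d y) * (W$b * l b y)))"
      unfolding hv_def using hE by (simp add: mult_ac)
    also have "\<dots> = et y * (lw y * lw y)" unfolding lw_def sum_product
      by (simp add: sum_distrib_left)
    finally show "hv y = et y * lw y * lw y" by simp
  qed
  have qt: "pd c ev x = et x * pd c lv x" for c
    by (rule quotient_trick[OF opn xU sev shv slv slw eev ehv]) (use lW lV in \<open>simp_all add: lw_def lv_def\<close>)
  have pdev: "pd c ev x = (\<Sum>d\<in>UNIV. \<Sum>b\<in>UNIV. V$d * W$b * pd c (E d b) x)" for c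
  proof -
    have "pd c ev x = (\<Sum>d\<in>UNIV. pd c (\<lambda>y. \<Sum>b\<in>UNIV. V$d * W$b * E d b y) x)"
      unfolding ev_def[abs_def]
      by (rule pd_sum) (use sEv dif in \<open>auto simp: mult.assoc sum_distrib_left[symmetric]\<close>)
    also have "\<dots> = (\<Sum>d\<in>UNIV. \<Sum>b\<in>UNIV. V$d * W$b * pd c (E d b) x)"
    proof (rule sum.cong[OF refl])
      fix d
      show "pd c (\<lambda>y. \<Sum>b\<in>UNIV. V$d * W$b * E d b y) x = (\<Sum>b\<in>UNIV. V$d * W$b * pd c (E d b) x)"
      proof -
        have dd: "(\<lambda>y. V$d * W$b * E d b y) differentiable (at x)" for b
          using dif[OF smooth_cmult[OF opn, of "E d b" "V$d * W$b"]] sE by simp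
        have "pd c (\<lambda>y. \<Sum>b\<in>UNIV. V$d * W$b * E d b y) x = (\<Sum>b\<in>UNIV. pd c (\<lambda>y. V$d * W$b * E d b y) x)"
          by (rule pd_sum) (use dd in auto)
        also have "\<dots> = (\<Sum>b\<in>UNIV. V$d * W$b * pd c (E d b) x)"
          by (rule sum.cong[OF refl], rule pd_cmult[OF dif]) (use sE in auto)
        finally show ?thesis .
      qed
    qed
    finally show ?thesis .
  qed
  have pdlv: "pd c lv x = (\<Sum>d\<in>UNIV. V$d * pd c (l d) x)" for c
    unfolding lv_def[abs_def]
    by (subst pd_sum) (use sl dif pd_cmult[OF dif] in \<open>auto intro: dif smooth_cmult[OF opn]\<close>)
  have Ex: "E p q x = et x * l p x * l q x" for p q using hE xU by blast
  have inner: "(\<Sum>b\<in>UNIV. \<Sum>d\<in>UNIV. W$b * V$d * nab2 g E x c d b)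
      = et x * (\<Sum>d\<in>UNIV. V$d * cov_deriv g l c d x)" for c
  proof -
    have t1: "(\<Sum>b\<in>UNIV. \<Sum>d\<in>UNIV. W$b * V$d * pd c (E d b) x) = et x * (\<Sum>d\<in>UNIV. V$d * pd c (l d) x)"
      using qt[of c] pdev[of c] pdlv[of c] sum.swap[of "\<lambda>b d. W$b * V$d * pd c (E d b) x"]
      by (simp add: mult_ac)
    have t2: "(\<Sum>b\<in>UNIV. \<Sum>d\<in>UNIV. W$b * V$d * (\<Sum>f\<in>UNIV. christoffel g f c d x * E f b x))
        = et x * (\<Sum>d\<in>UNIV. V$d * (\<Sum>f\<in>UNIV. christoffel g f c d x * l f x))"
    proof -
      have "(\<Sum>b\<in>UNIV. \<Sum>d\<in>UNIV. W$b * V$d * (\<Sum>f\<in>UNIV. christoffel g f c d x * E f b x))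
          = (\<Sum>b\<in>UNIV. (W$b * l b x) * (et x * (\<Sum>d\<in>UNIV. V$d * (\<Sum>f\<in>UNIV. christoffel g f c d x * l f x))))"
        unfolding Ex by (simp add: sum_distrib_left mult_ac)
      also have "\<dots> = et x * (\<Sum>d\<in>UNIV. V$d * (\<Sum>f\<in>UNIV. christoffel g f c d x * l f x))"
        using lW by (simp add: sum_distrib_right[symmetric])
      finally show ?thesis .
    qed
    have t3: "(\<Sum>b\<in>UNIV. \<Sum>d\<in>UNIV. W$b * V$d * (\<Sum>f\<in>UNIV. christoffel g f c b x * E d f x)) = 0"
    proof -
      have "(\<Sum>b\<in>UNIV. \<Sum>d\<in>UNIV. W$b * V$d * (\<Sum>f\<in>UNIV. christoffel g f c b x * E d f x))
          = (\<Sum>b\<in>UNIV. \<Sum>d\<in>UNIV. (V$d * l d x) * (W$b * et x * (\<Sum>f\<in>UNIV. christoffel g f c b x * l f x)))"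
        unfolding Ex by (simp add: sum_distrib_left mult_ac)
      also have "\<dots> = 0"
        using lV by (simp add: sum_distrib_right[symmetric])
      finally show ?thesis .
    qed
    have "(\<Sum>b\<in>UNIV. \<Sum>d\<in>UNIV. W$b * V$d * nab2 g E x c d b)
        = (\<Sum>b\<in>UNIV. \<Sum>d\<in>UNIV. W$b * V$d * pd c (E d b) x)
          - (\<Sum>b\<in>UNIV. \<Sum>d\<in>UNIV. W$b * V$d * (\<Sum>f\<in>UNIV. christoffel g f c d x * E f b x))
          - (\<Sum>b\<in>UNIV. \<Sum>d\<in>UNIV. W$b * V$d * (\<Sum>f\<in>UNIV. christoffel g f c b x * E d f x))"
      unfolding nab2_def by (simp add: right_diff_distrib sum_subtractf)
    also have "\<dots> = et x * (\<Sum>d\<in>UNIV. V$d * cov_deriv g l c d x)"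
      unfolding t1 t2 t3 cov_deriv_def by (simp add: right_diff_distrib sum_subtractf mult_ac)
    finally show ?thesis .
  qed
  have "(\<Sum>b\<in>UNIV. \<Sum>c\<in>UNIV. \<Sum>d\<in>UNIV. W$b * P$c * V$d * nab2 g E x c d b)
      = (\<Sum>c\<in>UNIV. \<Sum>b\<in>UNIV. \<Sum>d\<in>UNIV. W$b * P$c * V$d * nab2 g E x c d b)"
    by (rule sum.swap)
  also have "\<dots> = (\<Sum>c\<in>UNIV. P$c * (\<Sum>b\<in>UNIV. \<Sum>d\<in>UNIV. W$b * V$d * nab2 g E x c d b))"
    by (simp add: sum_distrib_left mult_ac)
  also have "\<dots> = et x * (\<Sum>c\<in>UNIV. \<Sum>d\<in>UNIV. P$c * V$d * cov_deriv g l c d x)"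
    unfolding inner by (simp add: sum_distrib_left mult_ac)
  finally show ?thesis .
qed

end



lemma raise_riemann:
  assumes "metric_ok g y"
  shows "riemann_up g a b c d y = (\<Sum>e\<in>UNIV. ginv g a e y * riemann g e b c d y)"
proof -
  have "(\<Sum>e\<in>UNIV. ginv g a e y * riemann g e b c d y)
      = (\<Sum>e\<in>UNIV. \<Sum>f\<in>UNIV. ginv g a e y * g e f y * riemann_up g f b c d y)"
    unfolding riemann_def by (simp add: sum_distrib_left mult_ac)
  also have "\<dots> = (\<Sum>f\<in>UNIV. (\<Sum>e\<in>UNIV. ginv g a e y * g e f y) * riemann_up g f b c d y)"
    by (subst sum.swap) (simp add: sum_distrib_right)
  also have "\<dots> = riemann_up g a b c d y" by (simp add: ginv_left[OF assms] ifz)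
  finally show ?thesis by simp
qed

lemma weyl_aux:
  fixes k m R Gec Ged Gbc Gbd Gdb Gcb Rdb Rcb Rde Rce S :: real
  assumes "k \<noteq> 0" "m \<noteq> 0"
  shows "R = (Gec*Rdb - Ged*Rcb - Gbc*Rde + Gbd*Rce)/k - S*(Gec*Gdb - Ged*Gcb)/(m*k) \<Longrightarrow>
    R = (Rdb/k - S/(m*k)*Gdb)*Gec + (-(Rcb/k - S/(m*k)*Gcb))*Ged + (-Gbc/k)*Rde + (Gbd/k)*Rce"
  apply (erule ssubst)
  using assms by (simp add: field_simps)

lemma weyl_form:
  fixes g :: "('n::finite) metric"
  assumes ok: "metric_ok g y" and n4: "CARD('n) \<ge> 4"
    and w0: "\<forall>a b c d. weyl g a b c d y = 0"
  shows "riemann_up g a b c d y =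
     (if a = c then 1 else 0) * (ricci g d b y / (real CARD('n) - 2) - scalar_curv g y / ((real CARD('n) - 1) * (real CARD('n) - 2)) * g d b y)
   - (if a = d then 1 else 0) * (ricci g c b y / (real CARD('n) - 2) - scalar_curv g y / ((real CARD('n) - 1) * (real CARD('n) - 2)) * g c b y)
   + g b c y * (- (\<Sum>e\<in>UNIV. ginv g a e y * ricci g d e y) / (real CARD('n) - 2))
   - g b d y * (- (\<Sum>e\<in>UNIV. ginv g a e y * ricci g c e y) / (real CARD('n) - 2))"
proof -
  let ?n = "real CARD('n)"
  have n2: "?n - 2 \<noteq> 0" and n1: "?n - 1 \<noteq> 0" using n4 by auto
  define s where "s = scalar_curv g y / ((?n - 1) * (?n - 2))"
  define \<alpha>1 where "\<alpha>1 = ricci g d b y / (?n - 2) - s * g d b y"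
  define \<alpha>2 where "\<alpha>2 = - (ricci g c b y / (?n - 2) - s * g c b y)"
  define \<beta>1 where "\<beta>1 = - g b c y / (?n - 2)"
  define \<beta>2 where "\<beta>2 = g b d y / (?n - 2)"
  have rw: "riemann g e b c d y = \<alpha>1 * g e c y + \<alpha>2 * g e d y + \<beta>1 * ricci g d e y + \<beta>2 * ricci g c e y" for e
  proof -
    have "weyl g e b c d y = 0" using w0 by blast
    then have "riemann g e b c d y = (g e c y * ricci g d b y - g e d y * ricci g c b y - g b c y * ricci g d e y + g b d y * ricci g c e y) / (?n - 2)
        - scalar_curv g y * (g e c y * g d b y - g e d y * g c b y) / ((?n - 1) * (?n - 2))"
      unfolding weyl_def Let_def by simp
    then show ?thesis unfolding \<alpha>1_def \<alpha>2_def \<beta>1_def \<beta>2_def s_def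
      by (rule weyl_aux[OF n2 n1])
  qed
  have "riemann_up g a b c d y = (\<Sum>e\<in>UNIV. ginv g a e y * (\<alpha>1 * g e c y + \<alpha>2 * g e d y + \<beta>1 * ricci g d e y + \<beta>2 * ricci g c e y))"
    unfolding raise_riemann[OF ok] rw ..
  also have "\<dots> = \<alpha>1 * (\<Sum>e\<in>UNIV. ginv g a e y * g e c y) + \<alpha>2 * (\<Sum>e\<in>UNIV. ginv g a e y * g e d y)
      + \<beta>1 * (\<Sum>e\<in>UNIV. ginv g a e y * ricci g d e y) + \<beta>2 * (\<Sum>e\<in>UNIV. ginv g a e y * ricci g c e y)"
    by (simp add: sum.distrib sum_distrib_left algebra_simps)
  also have "\<dots> = (if a = c then 1 else 0) * \<alpha>1 + (if a = d then 1 else 0) * \<alpha>2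
      + \<beta>1 * (\<Sum>e\<in>UNIV. ginv g a e y * ricci g d e y) + \<beta>2 * (\<Sum>e\<in>UNIV. ginv g a e y * ricci g c e y)"
    unfolding ginv_left[OF ok] by simp
  finally show ?thesis unfolding \<alpha>1_def \<alpha>2_def \<beta>1_def \<beta>2_def s_def by (simp add: algebra_simps)
qed


context pt
begin

lemma KK_add:
  assumes "\<forall>p q. smooth_on_U U (F1 p q)" "\<forall>p q. smooth_on_U U (F2 p q)"
  shows "KK g (\<lambda>p q y. F1 p q y + F2 p q y) x W A B = KK g F1 x W A B + KK g F2 x W A B"
  unfolding KK_def nab2_add[OF assms] by (simp add: ring_distribs sum.distrib sum_subtractf)

lemma KK_cmult:
  assumes "\<forall>p q. smooth_on_U U (F p q)"
  shows "KK g (\<lambda>p q y. k * F p q y) x W A B = k * KK g F x W A B"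
  unfolding KK_def nab2_cmult[OF assms] by (simp add: algebra_simps sum_distrib_left)

lemma KK_cong:
  assumes "\<forall>p q. \<forall>y\<in>U. F p q y = F' p q y"
  shows "KK g F x W A B = KK g F' x W A B"
  unfolding KK_def using nab2_cong[OF assms] by simp

end

theorem mainTheorem7:
  fixes g :: "('n::finite) metric" and l :: "'n \<Rightarrow> 'n field"
    and lam eta :: "'n field" and U :: "(real^'n) set"
  assumes "CARD('n) \<ge> 4"
    and "open U" and "U \<noteq> {}"
    and "\<forall>a b. smooth_on_U U (g a b)"
    and "\<forall>x\<in>U. lorentzian_at g x"
    and "\<forall>a. smooth_on_U U (l a)"
    and "\<forall>x\<in>U. raise g l x \<noteq> 0 \<and> gdot g x (raise g l x) (raise g l x) = 0"
    and "\<forall>x\<in>U. eta x \<noteq> 0"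
    and "\<forall>x\<in>U. \<forall>a b. ricci g a b x = lam x * g a b x + eta x * l a x * l b x"
    and "conformally_flat_on g U"
  shows "\<forall>x\<in>U. \<not> twisting_at g l x"
proof (intro ballI notI)
  fix x assume xU: "x \<in> U" and tw: "twisting_at g l x"
  let ?n = "real CARD('n)"
  have n2: "?n - 2 \<noteq> 0" "?n - 2 \<noteq> 1" and n1: "?n - 1 \<noteq> 0" and n0: "?n \<noteq> 0" using assms(1) by auto
  have good: "good g U" unfolding good_def using assms(2,4,5) lor_ok by blast
  interpret pt g U x using good xU by unfold_locales
  have ok: "\<And>y. y \<in> U \<Longrightarrow> metric_ok g y" using good_ok[OF good] by blast
  obtain N M i j where nf: "null_frame g x (raise g l x) N M" and ij: "i < CARD('n) - 2" "j < CARD('n) - 2"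
    and ne: "optical_matrix g l x M i j \<noteq> optical_matrix g l x M j i"
    using tw unfolding twisting_at_def by blast
  have lW: "(\<Sum>b\<in>UNIV. N$b * l b x) = 1"
    using nf gdot_raise[OF ok[OF xU]] unfolding null_frame_def by simp
  have lA: "(\<Sum>b\<in>UNIV. M i$b * l b x) = 0" and lB: "(\<Sum>b\<in>UNIV. M j$b * l b x) = 0"
    using nf ij gdot_raise[OF ok[OF xU]] unfolding null_frame_def by auto
  have oA: "(\<Sum>b\<in>UNIV. \<Sum>c\<in>UNIV. g b c x * N$b * M i$c) = 0"
   and oB: "(\<Sum>b\<in>UNIV. \<Sum>c\<in>UNIV. g b c x * N$b * M j$c) = 0"
    using nf ij unfolding null_frame_def gdot_def by auto
  have hRic: "\<forall>y\<in>U. \<forall>a b. ricci g a b y = lam y * g a b y + eta y * l a y * l b y" using assms(9) .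
  have ricsym: "ricci g a b y = ricci g b a y" if "y \<in> U" for a b y
    using hRic that g_sym[OF good that, of a b] by (simp add: mult_ac)
  define lam' where "lam' y = scalar_curv g y / ?n" for y
  have lam_eq: "lam y = lam' y" if yU: "y \<in> U" for y
  proof -
    have t1: "(\<Sum>b\<in>UNIV. \<Sum>d\<in>UNIV. ginv g b d y * g b d y) = ?n"
    proof -
      have "(\<Sum>d\<in>UNIV. ginv g b d y * g b d y) = 1" for b
        using ginv_left[OF ok[OF yU], of b b] g_sym[OF good yU] by simp
      then show ?thesis by simp
    qed
    have t2: "(\<Sum>b\<in>UNIV. \<Sum>d\<in>UNIV. ginv g b d y * (l b y * l d y)) = 0"
    proof -
      have "gdot g y (raise g l y) (raise g l y) = 0" using assms(7) yU by blast
      then have "(\<Sum>b\<in>UNIV. (raise g l y)$b * l b y) = 0"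
        unfolding gdot_raise[OF ok[OF yU]] .
      then have "(\<Sum>b\<in>UNIV. (\<Sum>d\<in>UNIV. ginv g b d y * l d y) * l b y) = 0"
        unfolding raise_def by simp
      then show ?thesis by (simp add: sum_distrib_left sum_distrib_right mult_ac)
    qed
    have "scalar_curv g y = lam y * (\<Sum>b\<in>UNIV. \<Sum>d\<in>UNIV. ginv g b d y * g b d y)
        + eta y * (\<Sum>b\<in>UNIV. \<Sum>d\<in>UNIV. ginv g b d y * (l b y * l d y))"
      unfolding scalar_curv_def using hRic yU
      by (simp add: sum.distrib sum_distrib_left algebra_simps)
    then have "scalar_curv g y = lam y * ?n" unfolding t1 t2 by simp
    then show ?thesis unfolding lam'_def using n0 by simp
  qed
  have sRic: "\<forall>p q. smooth_on_U U (ricci g p q)" using smooth_ricci[OF good] by blast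
  have sg: "\<forall>p q. smooth_on_U U (g p q)" using good_sm[OF good] by blast
  have sSc: "smooth_on_U U (scalar_curv g)" using smooth_scalar[OF good] .
  have slam': "smooth_on_U U lam'" unfolding lam'_def
    using smooth_divide[OF opn _ sSc smooth_const, of ?n] n0 by simp
  define E where "E p q y = ricci g p q y + (- lam' y) * g p q y" for p q y
  have sml: "smooth_on_U U (\<lambda>y. - lam' y)" using smooth_cmult[OF opn slam', of "-1"] by simp
  have sE: "\<forall>p q. smooth_on_U U (E p q)"
  proof (intro allI)
    fix p q
    have "smooth_on_U U (\<lambda>y. ricci g p q y + (- lam' y) * g p q y)"
      using smooth_add[OF opn smooth_ricci[OF good] smooth_mult[OF opn sml good_sm[OF good]], of p q p q] by simp
    then show "smooth_on_U U (E p q)" unfolding E_def[abs_def] by simp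
  qed
  have hE: "\<forall>y\<in>U. \<forall>p q. E p q y = eta y * l p y * l q y"
    unfolding E_def using hRic lam_eq by simp
  define s where "s y = scalar_curv g y / ((?n - 1) * (?n - 2))" for y
  have ss: "smooth_on_U U (\<lambda>y. - s y)" unfolding s_def
    using smooth_cmult[OF opn smooth_divide[OF opn _ sSc smooth_const, of "(?n - 1) * (?n - 2)"], of "-1"] n1 n2 by simp
  define H where "H p q y = (1 / (?n - 2)) * ricci g p q y + (- s y) * g p q y" for p q y
  define Q where "Q p q y = - (\<Sum>e\<in>UNIV. ginv g p e y * ricci g q e y) / (?n - 2)" for p q y
  have sH1: "\<forall>p q. smooth_on_U U (\<lambda>y. (1 / (?n - 2)) * ricci g p q y)" using sRic smooth_cmult[OF opn] by blast
  have sH2: "\<forall>p q. smooth_on_U U (\<lambda>y. (- s y) * g p q y)" using sg smooth_mult[OF opn ss] by blast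
  have sH: "\<forall>p q. smooth_on_U U (H p q)" unfolding H_def[abs_def]
    using sH1 sH2 smooth_add[OF opn] by blast
  have sQ: "\<forall>p q. smooth_on_U U (Q p q)"
  proof (intro allI)
    fix p q
    have "smooth_on_U U (\<lambda>y. (- 1 / (?n - 2)) * (\<Sum>e\<in>UNIV. ginv g p e y * ricci g q e y))"
      by (intro smooth_cmult[OF opn] smooth_sum[OF opn] ballI smooth_mult[OF opn])
         (use good_ginv[OF good] sRic in auto)
    then show "smooth_on_U U (Q p q)" unfolding Q_def[abs_def] by simp
  qed
  have cf: "\<forall>y\<in>U. \<forall>a b c d. weyl g a b c d y = 0" using assms(10) unfolding conformally_flat_on_def by blast
  have WF: "\<forall>a b c d. \<forall>y\<in>U. riemann_up g a b c d y = TH H a b c d y + TQ g Q a b c d y"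
  proof (intro allI ballI)
    fix a b c d y assume yU: "y \<in> U"
    show "riemann_up g a b c d y = TH H a b c d y + TQ g Q a b c d y"
      unfolding weyl_form[OF ok[OF yU] assms(1) bspec[OF cf yU]] TH_def TQ_def H_def Q_def s_def
      by (simp add: algebra_simps)
  qed
  have sTH: "\<forall>a b c d. smooth_on_U U (TH H a b c d)" unfolding TH_def
    using sH by (intro allI smooth_diff[OF opn] smooth_cmult[OF opn]) auto
  have sTQ: "\<forall>a b c d. smooth_on_U U (TQ g Q a b c d)" unfolding TQ_def
    using sQ sg by (intro allI smooth_diff[OF opn] smooth_mult[OF opn]) auto
  have main: "nab2 g (ricci g) x c d b - nab2 g (ricci g) x d c b
      = nab2 g H x c d b - nab2 g H x d c b + (g b c x * Zf g Q x d - g b d x * Zf g Q x c)" for b c d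
  proof -
    have nR: "nabRic g x p q r = nab2 g (ricci g) x p r q" for p q r
    proof -
      have "pd p (ricci g q r) x = pd p (ricci g r q) x"
        by (rule pd_cong[OF opn xU]) (use ricsym in auto)
      then show ?thesis unfolding nabRic_def nab2_def using ricsym[OF xU] by simp
    qed
    have "(\<Sum>a\<in>UNIV. nabT g (riemann_up g) x a a b c d)
        = (\<Sum>a\<in>UNIV. nabT g (\<lambda>a b c d y. TH H a b c d y + TQ g Q a b c d y) x a a b c d)"
      by (rule sum.cong[OF refl], rule nabT_cong) (use WF in auto)
    also have "\<dots> = (\<Sum>a\<in>UNIV. nabT g (TH H) x a a b c d) + (\<Sum>a\<in>UNIV. nabT g (TQ g Q) x a a b c d)"
      unfolding nabT_add[OF sTH sTQ] sum.distrib ..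
    also have "\<dots> = nab2 g H x c d b - nab2 g H x d c b + (g b c x * Zf g Q x d - g b d x * Zf g Q x c)"
      unfolding nabT_TH[OF sH] nabT_TQ[OF sQ] ..
    finally show ?thesis unfolding contracted_bianchi nR by simp
  qed
  let ?A = "M i" and ?B = "M j"
  have K1: "KK g (ricci g) x N ?A ?B = KK g H x N ?A ?B"
  proof -
    have "KK g (ricci g) x N ?A ?B = KK g H x N ?A ?B
        + (\<Sum>b\<in>UNIV. \<Sum>c\<in>UNIV. \<Sum>d\<in>UNIV. N$b * ?A$c * ?B$d * (g b c x * Zf g Q x d - g b d x * Zf g Q x c))"
      unfolding KK_def main by (simp add: ring_distribs sum.distrib sum_subtractf)
    then show ?thesis using KK_zero[OF oA oB] by simp
  qed
  have K2: "KK g H x N ?A ?B = (1 / (?n - 2)) * KK g (ricci g) x N ?A ?B"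
  proof -
    have "KK g H x N ?A ?B = KK g (\<lambda>p q y. (1 / (?n - 2)) * ricci g p q y) x N ?A ?B + KK g (\<lambda>p q y. (- s y) * g p q y) x N ?A ?B"
      unfolding H_def by (rule KK_add[OF sH1 sH2])
    also have "\<dots> = (1 / (?n - 2)) * KK g (ricci g) x N ?A ?B + 0"
      by (simp only: KK_cmult[OF sRic] KK_phig[OF ss oA oB])
    also have "\<dots> = (1 / (?n - 2)) * KK g (ricci g) x N ?A ?B" by simp
    finally show ?thesis .
  qed
  have K3: "KK g (ricci g) x N ?A ?B = KK g E x N ?A ?B"
  proof -
    have "KK g (ricci g) x N ?A ?B = KK g (\<lambda>p q y. lam' y * g p q y + E p q y) x N ?A ?B"
      by (rule KK_cong) (simp add: E_def)
    also have "\<dots> = KK g (\<lambda>p q y. lam' y * g p q y) x N ?A ?B + KK g E x N ?A ?B"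
      by (rule KK_add[OF _ sE]) (use sg smooth_mult[OF opn slam'] in blast)
    also have "\<dots> = KK g E x N ?A ?B" using KK_phig[OF slam' oA oB] by simp
    finally show ?thesis .
  qed
  have KE0: "KK g E x N ?A ?B = 0"
  proof -
    have "KK g E x N ?A ?B = (1 / (?n - 2)) * KK g E x N ?A ?B" using K1 K2 K3 by simp
    then show ?thesis using n2 by (simp add: field_simps)
  qed
  have e1: "(\<Sum>b\<in>UNIV. \<Sum>c\<in>UNIV. \<Sum>d\<in>UNIV. N$b * ?A$c * ?B$d * nab2 g E x c d b)
      = eta x * (\<Sum>c\<in>UNIV. \<Sum>d\<in>UNIV. ?A$c * ?B$d * cov_deriv g l c d x)"
    by (rule nab2E[OF sE assms(6) hE lB lW])
  have e2: "(\<Sum>b\<in>UNIV. \<Sum>c\<in>UNIV. \<Sum>d\<in>UNIV. N$b * ?A$c * ?B$d * nab2 g E x d c b)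
      = eta x * (\<Sum>c\<in>UNIV. \<Sum>d\<in>UNIV. ?B$c * ?A$d * cov_deriv g l c d x)"
  proof -
    have "(\<Sum>b\<in>UNIV. \<Sum>c\<in>UNIV. \<Sum>d\<in>UNIV. N$b * ?A$c * ?B$d * nab2 g E x d c b)
        = (\<Sum>b\<in>UNIV. \<Sum>d\<in>UNIV. \<Sum>c\<in>UNIV. N$b * ?B$d * ?A$c * nab2 g E x d c b)"
      by (rule sum.cong[OF refl], subst sum.swap) (simp add: mult_ac)
    also have "\<dots> = eta x * (\<Sum>d\<in>UNIV. \<Sum>c\<in>UNIV. ?B$d * ?A$c * cov_deriv g l d c x)"
      by (rule nab2E[OF sE assms(6) hE lA lW])
    finally show ?thesis .
  qed
  have o1: "optical_matrix g l x M j i = (\<Sum>c\<in>UNIV. \<Sum>d\<in>UNIV. ?A$c * ?B$d * cov_deriv g l c d x)"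
    unfolding optical_matrix_def by (subst sum.swap) (simp add: mult_ac)
  have o2: "optical_matrix g l x M i j = (\<Sum>c\<in>UNIV. \<Sum>d\<in>UNIV. ?B$c * ?A$d * cov_deriv g l c d x)"
    unfolding optical_matrix_def by (subst sum.swap) (simp add: mult_ac)
  have "KK g E x N ?A ?B = eta x * (optical_matrix g l x M j i - optical_matrix g l x M i j)"
  proof -
    have "KK g E x N ?A ?B = (\<Sum>b\<in>UNIV. \<Sum>c\<in>UNIV. \<Sum>d\<in>UNIV. N$b * ?A$c * ?B$d * nab2 g E x c d b)
        - (\<Sum>b\<in>UNIV. \<Sum>c\<in>UNIV. \<Sum>d\<in>UNIV. N$b * ?A$c * ?B$d * nab2 g E x d c b)"
      unfolding KK_def by (simp add: right_diff_distrib sum_subtractf)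
    then show ?thesis unfolding e1 e2 o1 o2 by (simp add: right_diff_distrib)
  qed
  then have "optical_matrix g l x M j i = optical_matrix g l x M i j"
    using KE0 assms(8) xU by simp
  then show False using ne by simp
qed



end
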